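(* Suppose $\nu:\mathcal{P}\to\mathcal{H}$ is pathwise differentiable at $P_0$, $\beta_n\in\ell^2\cap[0,1]^{\mathbb{N}}$ for each $n$, and both $\mathcal{R}_n^{j,\beta_n}$ and $\mathcal{D}_n^{j,\beta_n}$ are $O_p(\|\beta_n\|_{\ell^2}/n^{1/2})$ for $j\in\{1,2\}$. Then $$\bar{\nu}_n^{\beta_n}-\nu(P_0)=\frac12\sum_{j=1}^2\mathcal{B}_n^{j,\beta_n}+P_n\phi_0^{\beta_n}+O_p(\|\beta_n\|_{\ell^2}/n^{1/2}).$$ Moreover, if $\mathcal{B}_n^{j,\beta_n}=O_p(\|\beta_n\|_{\ell^2}/n^{1/2})$ for $j\in\{1,2\}$, then $\bar{\nu}_n^{\beta_n}-\nu(P_0)=O_p(\|\beta_n\|_{\ell^2}/n^{1/2})$.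
   Context: Let $(\mathcal{Z},\mathbf{B})$ be a Polish space, $\mathcal{P}$ a model of distributions dominated by a $\sigma$-finite measure $\lambda$, $\mathcal{H}$ a real separable Hilbert space with orthonormal basis $(h_k)_{k\ge1}$ (padded with zeros if finite-dimensional). $\nu$ is pathwise differentiable at $P$ if there is a continuous linear $\dot{\nu}_P$ from the tangent space $\dot{\mathcal{P}}_P$ (closed linear span in $L^2(P)$ of scores $s$ of submodels $\{P_\epsilon\}\subset\mathcal{P}$ with $\|p_\epsilon^{1/2}-p^{1/2}-\epsilon sp^{1/2}/2\|_{L^2(\lambda)}=o(\epsilon)$) to $\mathcal{H}$ with $\|\nu(P_\epsilon)-\nu(P)-\epsilon\dot{\nu}_P(s)\|_{\mathcal{H}}=o(\epsilon)$ along every such submodel; $\dot{\nu}_P^*:\mathcal{H}\to\dot{\mathcal{P}}_P$ is its adjoint (efficient influence operator). For $\beta\in\ell^2\cap[0,1]^{\mathbb{N}}$ and $P$ at which $\nu$ is pathwise differentiable, the $\beta$-regularized EIF is $\phi_P^\beta(z)=\sum_k\beta_k\dot{\nu}_P^*(h_k)(z)h_k\in L^2(P;\mathcal{H})$. $Qf=\int f\,dQ$ (Bochner integral for $\mathcal{H}$-valued $f$). Cross-fitting: $P_0\in\mathcal{P}$, $n$ even, $Z_1,\dots,Z_n$ iid $P_0$ with empirical distribution $P_n$; $\widehat{P}_n^1\in\mathcal{P}$ estimates $P_0$ from $Z_1,\dots,Z_{n/2}$ and $P_n^1$ is the empirical distribution of $Z_{n/2+1},\dots,Z_n$; $\widehat{P}_n^2$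 uses $Z_{n/2+1},\dots,Z_n$ and $P_n^2$ is the empirical distribution of $Z_1,\dots,Z_{n/2}$; $\nu$ is assumed pathwise differentiable at each $\widehat{P}_n^j$, and $\phi_n^{j,\beta}=\phi^\beta_{\widehat{P}_n^j}$, $\phi_0^\beta=\phi^\beta_{P_0}$. Regularized one-step estimator: $\bar{\nu}_n^\beta=\frac12\sum_j[\nu(\widehat{P}_n^j)+P_n^j\phi_n^{j,\beta}]$. For $P\in\mathcal{P}$: $\mathcal{B}_P^\beta=\sum_k(1-\beta_k)\langle\nu(P)-\nu(P_0),h_k\rangle_{\mathcal{H}}h_k$ and $\mathcal{R}_P^\beta=\nu(P)-\nu(P_0)+P_0\phi_P^\beta-\mathcal{B}_P^\beta$; $\mathcal{B}_n^{j,\beta}=\mathcal{B}^\beta_{\widehat{P}_n^j}$, $\mathcal{R}_n^{j,\beta}=\mathcal{R}^\beta_{\widehat{P}_n^j}$, $\mathcal{D}_n^{j,\beta}=(P_n^j-P_0)(\phi_n^{j,\beta}-\phi_0^\beta)$. $O_p$ of $\mathcal{H}$-valued terms refers to their norms. *)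

theory Defs
  imports "HOL-Probability.Probability"
begin

definition dens :: "'z measure \<Rightarrow> 'z measure \<Rightarrow> 'z \<Rightarrow> real" where
  "dens lam P z = enn2real (RN_deriv lam P z)"

definition qmd_path ::
  "'z measure \<Rightarrow> 'z measure set \<Rightarrow> 'z measure \<Rightarrow> (real \<Rightarrow> 'z measure) \<Rightarrow> ('z \<Rightarrow> real) \<Rightarrow> bool" where
  "qmd_path lam Pm P Pe s \<longleftrightarrow>
     Pe 0 = P \<and> (\<forall>\<^sub>F e in nhds 0. Pe e \<in> Pm) \<and>
     s \<in> borel_measurable P \<and> integrable P (\<lambda>z. (s z)\<^sup>2) \<and>
     ((\<lambda>e. (\<integral>\<^sup>+ z. ennreal ((sqrt (dens lam (Pe e) z) - sqrt (dens lam P z)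
               - e * s z * sqrt (dens lam P z) / 2)\<^sup>2) \<partial>lam) / ennreal (e\<^sup>2))
        \<longlongrightarrow> 0) (at 0)"

definition scores :: "'z measure \<Rightarrow> 'z measure set \<Rightarrow> 'z measure \<Rightarrow> ('z \<Rightarrow> real) set" where
  "scores lam Pm P = {s. \<exists>Pe. qmd_path lam Pm P Pe s}"

definition lin_span_fun :: "('z \<Rightarrow> real) set \<Rightarrow> ('z \<Rightarrow> real) set" where
  "lin_span_fun S = {f. \<exists>(k::nat) c g. (\<forall>i<k. g i \<in> S) \<and> f = (\<lambda>z. \<Sum>i<k. c i * g i z)}"

definition tangent_space :: "'z measure \<Rightarrow> 'z measure set \<Rightarrow> 'z measure \<Rightarrow> ('z \<Rightarrow> real) set" where
  "tangent_space lam Pm P = {g. g \<in> borel_measurable P \<and> integrable P (\<lambda>z. (g z)\<^sup>2) \<and>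
     (\<forall>e>0. \<exists>f\<in>lin_span_fun (scores lam Pm P). (\<integral>z. (g z - f z)\<^sup>2 \<partial>P) < e)}"

definition pd_deriv ::
  "'z measure \<Rightarrow> 'z measure set \<Rightarrow> ('z measure \<Rightarrow> 'h::real_normed_vector) \<Rightarrow> 'z measure
   \<Rightarrow> (('z \<Rightarrow> real) \<Rightarrow> 'h) \<Rightarrow> bool" where
  "pd_deriv lam Pm nu P D \<longleftrightarrow>
     (\<forall>f\<in>tangent_space lam Pm P. \<forall>g\<in>tangent_space lam Pm P. \<forall>a b.
        D (\<lambda>z. a * f z + b * g z) = a *\<^sub>R D f + b *\<^sub>R D g) \<and>
     (\<exists>C. \<forall>f\<in>tangent_space lam Pm P. norm (D f) \<le> C * sqrt (\<integral>z. (f z)\<^sup>2 \<partial>P)) \<and>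
     (\<forall>Pe s. qmd_path lam Pm P Pe s \<longrightarrow>
        ((\<lambda>e. norm (nu (Pe e) - nu P - e *\<^sub>R D s) / e) \<longlongrightarrow> 0) (at 0))"

definition pathwise_differentiable ::
  "'z measure \<Rightarrow> 'z measure set \<Rightarrow> ('z measure \<Rightarrow> 'h::real_normed_vector) \<Rightarrow> 'z measure \<Rightarrow> bool" where
  "pathwise_differentiable lam Pm nu P \<longleftrightarrow> (\<exists>D. pd_deriv lam Pm nu P D)"

definition pd_op ::
  "'z measure \<Rightarrow> 'z measure set \<Rightarrow> ('z measure \<Rightarrow> 'h::real_normed_vector) \<Rightarrow> 'z measure
   \<Rightarrow> ('z \<Rightarrow> real) \<Rightarrow> 'h" where
  "pd_op lam Pm nu P = (SOME D. pd_deriv lam Pm nu P D)"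

text \<open>Efficient influence operator (adjoint of the pathwise derivative), a representative.\<close>
definition eio ::
  "'z measure \<Rightarrow> 'z measure set \<Rightarrow> ('z measure \<Rightarrow> 'h::real_inner) \<Rightarrow> 'z measure \<Rightarrow> 'h \<Rightarrow> 'z \<Rightarrow> real" where
  "eio lam Pm nu P h = (SOME g. g \<in> tangent_space lam Pm P \<and>
     (\<forall>s\<in>tangent_space lam Pm P. inner (pd_op lam Pm nu P s) h = (\<integral>z. s z * g z \<partial>P)))"

text \<open>beta-regularized EIF: sum over k of beta_k (eio h_k)(z) h_k (pointwise series; 0 where it diverges).\<close>
definition reg_eif ::
  "'z measure \<Rightarrow> 'z measure set \<Rightarrow> ('z measure \<Rightarrow> 'h::{real_inner,banach}) \<Rightarrow> (nat \<Rightarrow> 'h)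
   \<Rightarrow> 'z measure \<Rightarrow> (nat \<Rightarrow> real) \<Rightarrow> 'z \<Rightarrow> 'h" where
  "reg_eif lam Pm nu hb P beta z =
     (if summable (\<lambda>k. (beta k * eio lam Pm nu P (hb k) z) *\<^sub>R hb k)
      then (\<Sum>k. (beta k * eio lam Pm nu P (hb k) z) *\<^sub>R hb k) else 0)"

definition reg_bias ::
  "('z measure \<Rightarrow> 'h::{real_inner,banach}) \<Rightarrow> 'z measure \<Rightarrow> (nat \<Rightarrow> 'h) \<Rightarrow> (nat \<Rightarrow> real) \<Rightarrow> 'z measure \<Rightarrow> 'h" where
  "reg_bias nu P0 hb beta P = (\<Sum>k. ((1 - beta k) * inner (nu P - nu P0) (hb k)) *\<^sub>R hb k)"

definition reg_rem ::
  "'z measure \<Rightarrow> 'z measure set \<Rightarrow> ('z measure \<Rightarrow> 'h::{real_inner,banach,second_countable_topology})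
   \<Rightarrow> (nat \<Rightarrow> 'h) \<Rightarrow> 'z measure \<Rightarrow> (nat \<Rightarrow> real) \<Rightarrow> 'z measure \<Rightarrow> 'h" where
  "reg_rem lam Pm nu hb P0 beta P =
     nu P - nu P0 + (\<integral>z. reg_eif lam Pm nu hb P beta z \<partial>P0) - reg_bias nu P0 hb beta P"

definition emp_mean :: "'z list \<Rightarrow> ('z \<Rightarrow> 'h::real_vector) \<Rightarrow> 'h" where
  "emp_mean xs f = (1 / real (length xs)) *\<^sub>R sum_list (map f xs)"

definition ell2_norm :: "(nat \<Rightarrow> real) \<Rightarrow> real" where
  "ell2_norm beta = sqrt (\<Sum>k. (beta k)\<^sup>2)"

definition evens :: "nat filter" where
  "evens = inf sequentially (principal {n. even n})"

definition Op :: "nat filter \<Rightarrow> 'a measure \<Rightarrow> (nat \<Rightarrow> 'a \<Rightarrow> 'h::real_normed_vector) \<Rightarrow> (nat \<Rightarrow> real) \<Rightarrow> bool" where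
  "Op F M X r \<longleftrightarrow> (\<forall>e>0. \<exists>K. \<forall>\<^sub>F n in F. \<exists>A\<in>sets M. measure M A \<ge> 1 - e \<and>
       (\<forall>\<omega>\<in>A. norm (X n \<omega>) \<le> K * r n))"

definition first_half :: "(nat \<Rightarrow> 'a \<Rightarrow> 'z) \<Rightarrow> nat \<Rightarrow> 'a \<Rightarrow> 'z list" where
  "first_half Z n \<omega> = map (\<lambda>i. Z i \<omega>) [0..<n div 2]"

definition second_half :: "(nat \<Rightarrow> 'a \<Rightarrow> 'z) \<Rightarrow> nat \<Rightarrow> 'a \<Rightarrow> 'z list" where
  "second_half Z n \<omega> = map (\<lambda>i. Z i \<omega>) [n div 2..<n]"

text \<open>Regularized one-step estimator: P1, P2 are the two fold estimates, xs1, xs2 the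
  samples on which the corresponding correction is averaged.\<close>
definition one_step ::
  "'z measure \<Rightarrow> 'z measure set \<Rightarrow> ('z measure \<Rightarrow> 'h::{real_inner,banach}) \<Rightarrow> (nat \<Rightarrow> 'h)
   \<Rightarrow> (nat \<Rightarrow> real) \<Rightarrow> 'z measure \<Rightarrow> 'z list \<Rightarrow> 'z measure \<Rightarrow> 'z list \<Rightarrow> 'h" where
  "one_step lam Pm nu hb beta P1 xs1 P2 xs2 = (1/2) *\<^sub>R
     ((nu P1 + emp_mean xs1 (reg_eif lam Pm nu hb P1 beta))
    + (nu P2 + emp_mean xs2 (reg_eif lam Pm nu hb P2 beta)))"

definition emp_term ::
  "'z measure \<Rightarrow> 'z measure set \<Rightarrow> ('z measure \<Rightarrow> 'h::{real_inner,banach,second_countable_topology})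
   \<Rightarrow> (nat \<Rightarrow> 'h) \<Rightarrow> 'z measure \<Rightarrow> (nat \<Rightarrow> real) \<Rightarrow> 'z measure \<Rightarrow> 'z list \<Rightarrow> 'h" where
  "emp_term lam Pm nu hb P0 beta P xs =
     emp_mean xs (\<lambda>z. reg_eif lam Pm nu hb P beta z - reg_eif lam Pm nu hb P0 beta z)
   - (\<integral>z. reg_eif lam Pm nu hb P beta z - reg_eif lam Pm nu hb P0 beta z \<partial>P0)"

end

theory Submission
  imports Defs
begin


lemma int_prod:
  fixes f g :: "'a \<Rightarrow> real"
  assumes [measurable]: "f \<in> borel_measurable M" "g \<in> borel_measurable M"
    and "integrable M (\<lambda>z. (f z)\<^sup>2)" "integrable M (\<lambda>z. (g z)\<^sup>2)"
  shows "integrable M (\<lambda>z. f z * g z)"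
proof (rule Bochner_Integration.integrable_bound)
  show "integrable M (\<lambda>z. (f z)\<^sup>2 + (g z)\<^sup>2)" using assms by auto
  show "(\<lambda>z. f z * g z) \<in> borel_measurable M" by measurable
  show "AE x in M. norm (f x * g x) \<le> norm ((f x)\<^sup>2 + (g x)\<^sup>2)"
  proof
    fix x
    have "\<bar>f x * g x\<bar> \<le> (f x)\<^sup>2 + (g x)\<^sup>2"
    proof -
      have "0 \<le> (\<bar>f x\<bar> - \<bar>g x\<bar>)\<^sup>2" by simp
      then have "2 * \<bar>f x\<bar> * \<bar>g x\<bar> \<le> (f x)\<^sup>2 + (g x)\<^sup>2"
        by (simp add: power2_eq_square algebra_simps)
      moreover have "\<bar>f x\<bar> * \<bar>g x\<bar> \<ge> 0" by simp
      moreover have "\<bar>f x * g x\<bar> = \<bar>f x\<bar> * \<bar>g x\<bar>" by (simp add: abs_mult)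
      ultimately show ?thesis by linarith
    qed
    then show "norm (f x * g x) \<le> norm ((f x)\<^sup>2 + (g x)\<^sup>2)" by simp
  qed
qed

lemma int_sq_lin:
  fixes f g :: "'a \<Rightarrow> real"
  assumes [measurable]: "f \<in> borel_measurable M" "g \<in> borel_measurable M"
    and "integrable M (\<lambda>z. (f z)\<^sup>2)" "integrable M (\<lambda>z. (g z)\<^sup>2)"
  shows "integrable M (\<lambda>z. (a * f z + b * g z)\<^sup>2)"
proof -
  have e: "(\<lambda>z. (a * f z + b * g z)\<^sup>2) = (\<lambda>z. a\<^sup>2 * (f z)\<^sup>2 + (2*a*b) * (f z * g z) + b\<^sup>2 * (g z)\<^sup>2)"
    by (auto simp: power2_eq_square algebra_simps)
  show ?thesis unfolding e using assms int_prod[OF assms] by auto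
qed

lemma int_sq_lin_expand:
  fixes f g :: "'a \<Rightarrow> real"
  assumes [measurable]: "f \<in> borel_measurable M" "g \<in> borel_measurable M"
    and "integrable M (\<lambda>z. (f z)\<^sup>2)" "integrable M (\<lambda>z. (g z)\<^sup>2)"
  shows "(\<integral>z. (a * f z + b * g z)\<^sup>2 \<partial>M) =
     a\<^sup>2 * (\<integral>z. (f z)\<^sup>2 \<partial>M) + 2*a*b * (\<integral>z. f z * g z \<partial>M) + b\<^sup>2 * (\<integral>z. (g z)\<^sup>2 \<partial>M)"
proof -
  have e: "(\<lambda>z. (a * f z + b * g z)\<^sup>2) = (\<lambda>z. a\<^sup>2 * (f z)\<^sup>2 + (2*a*b) * (f z * g z) + b\<^sup>2 * (g z)\<^sup>2)"
    by (auto simp: power2_eq_square algebra_simps)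
  show ?thesis unfolding e using assms int_prod[OF assms] by auto
qed

lemma quad_nonneg_imp:
  fixes A B C :: real
  assumes "\<And>t. 0 \<le> A - 2*t*B + t\<^sup>2 * C" "C \<ge> 0"
  shows "B\<^sup>2 \<le> A * C"
proof (cases "C = 0")
  case True
  have "B = 0"
  proof (rule ccontr)
    assume "B \<noteq> 0"
    have "0 \<le> A - 2*((A+1)/(2*B))*B" using assms(1)[of "(A+1)/(2*B)"] True by simp
    also have "\<dots> = -1" using \<open>B \<noteq> 0\<close> by (simp add: field_simps)
    finally show False by simp
  qed
  then show ?thesis using assms(1)[of 0] True by simp
next
  case False
  then have C: "C > 0" using assms(2) by simp
  have "0 \<le> A - 2*(B/C)*B + (B/C)\<^sup>2 * C" by (rule assms(1))
  also have "\<dots> = (A * C - B\<^sup>2) / C" using C by (simp add: field_simps power2_eq_square)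
  finally show ?thesis using C by (simp add: divide_nonneg_pos zero_le_divide_iff)
qed

lemma cauchy_schwarz_int:
  fixes f g :: "'a \<Rightarrow> real"
  assumes [measurable]: "f \<in> borel_measurable M" "g \<in> borel_measurable M"
    and "integrable M (\<lambda>z. (f z)\<^sup>2)" "integrable M (\<lambda>z. (g z)\<^sup>2)"
  shows "(\<integral>z. f z * g z \<partial>M)\<^sup>2 \<le> (\<integral>z. (f z)\<^sup>2 \<partial>M) * (\<integral>z. (g z)\<^sup>2 \<partial>M)"
proof (rule quad_nonneg_imp)
  fix t
  have "0 \<le> (\<integral>z. (1 * f z + (-t) * g z)\<^sup>2 \<partial>M)" by simp
  also have "\<dots> = (\<integral>z. (f z)\<^sup>2 \<partial>M) - 2*t*(\<integral>z. f z * g z \<partial>M) + t\<^sup>2 * (\<integral>z. (g z)\<^sup>2 \<partial>M)"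
    using int_sq_lin_expand[OF assms, of 1 "-t"] by simp
  finally show "0 \<le> (\<integral>z. (f z)\<^sup>2 \<partial>M) - 2*t*(\<integral>z. f z * g z \<partial>M) + t\<^sup>2 * (\<integral>z. (g z)\<^sup>2 \<partial>M)" .
qed simp

lemma cs_abs:
  fixes f g :: "'a \<Rightarrow> real"
  assumes [measurable]: "f \<in> borel_measurable M" "g \<in> borel_measurable M"
    and "integrable M (\<lambda>z. (f z)\<^sup>2)" "integrable M (\<lambda>z. (g z)\<^sup>2)"
  shows "\<bar>\<integral>z. f z * g z \<partial>M\<bar> \<le> sqrt (\<integral>z. (f z)\<^sup>2 \<partial>M) * sqrt (\<integral>z. (g z)\<^sup>2 \<partial>M)"
  using cauchy_schwarz_int[OF assms]
  by (metis real_sqrt_abs real_sqrt_le_mono real_sqrt_mult)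


lemma nn_le_imp_int:
  fixes f :: "'a \<Rightarrow> real"
  assumes [measurable]: "f \<in> borel_measurable M" and nn: "\<And>x. 0 \<le> f x"
    and le: "(\<integral>\<^sup>+x. ennreal (f x) \<partial>M) \<le> ennreal c" and c: "0 \<le> c"
  shows "integrable M f \<and> (\<integral>x. f x \<partial>M) \<le> c"
proof -
  have i: "integrable M f"
    by (rule integrableI_nonneg) (use nn le in \<open>auto simp: top.not_eq_extremum le_less_trans\<close>)
  have "ennreal (\<integral>x. f x \<partial>M) \<le> ennreal c"
    using nn_integral_eq_integral[OF i] nn le by simp
  then show ?thesis using i c by simp
qed

lemma riesz_fischer:
  fixes u :: "nat \<Rightarrow> 'a \<Rightarrow> real"
  assumes P: "prob_space M"
    and meas[measurable]: "\<And>n. u n \<in> borel_measurable M"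
    and sq: "\<And>n. integrable M (\<lambda>z. (u n z)\<^sup>2)"
    and cauchy: "\<And>n m. n \<le> m \<Longrightarrow> (\<integral>z. (u m z - u n z)\<^sup>2 \<partial>M) \<le> (1/8)^n"
  shows "\<exists>f. f \<in> borel_measurable M \<and> integrable M (\<lambda>z. (f z)\<^sup>2) \<and>
             (\<forall>n. integrable M (\<lambda>z. (f z - u n z)\<^sup>2) \<and> (\<integral>z. (f z - u n z)\<^sup>2 \<partial>M) \<le> (1/8)^n)"
proof -
  interpret prob_space M by (rule P)
  have isq: "integrable M (\<lambda>z. (u m z - u n z)\<^sup>2)" for m n
    using int_sq_lin[OF meas meas sq sq, of 1 m "-1" n] by simp
  define A where "A k = {z\<in>space M. (1/4::real)^k \<le> (u (Suc k) z - u k z)\<^sup>2}" for k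
  have A_sets[measurable]: "A k \<in> sets M" for k unfolding A_def by measurable
  have mA: "measure M (A k) \<le> (1/2)^k" for k
  proof -
    have "measure M (A k) \<le> (\<integral>z. (u (Suc k) z - u k z)\<^sup>2 \<partial>M) / (1/4)^k"
      unfolding A_def by (rule integral_Markov_inequality_measure[OF isq, where A="space M"]) auto
    also have "\<dots> \<le> (1/8)^k / (1/4)^k"
      by (intro divide_right_mono cauchy) auto
    also have "\<dots> = (1/2)^k" by (simp add: power_divide field_simps flip: power_mult_distrib)
    finally show ?thesis .
  qed
  have sumA: "summable (\<lambda>k. measure M (A k))"
    by (rule summable_comparison_test[where g="\<lambda>k. (1/2::real)^k"]) (use mA in auto)
  have "AE z in M. eventually (\<lambda>k. z \<in> space M - A k) sequentially"
    by (rule borel_cantelli_AE1) (use sumA in \<open>auto simp: emeasure_eq_measure\<close>)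
  then have AEconv: "AE z in M. convergent (\<lambda>k. u k z)"
  proof (rule AE_mp, intro AE_I2 impI)
    fix z assume z: "z \<in> space M" and ev: "eventually (\<lambda>k. z \<in> space M - A k) sequentially"
    have "eventually (\<lambda>k. norm (u (Suc k) z - u k z) \<le> (1/2)^k) sequentially"
    proof (rule eventually_mono[OF ev])
      fix k assume "z \<in> space M - A k"
      then have "(u (Suc k) z - u k z)\<^sup>2 < (1/4)^k" using z unfolding A_def by auto
      also have "(1/4::real)^k = ((1/2)^k)\<^sup>2"
        by (simp add: power_divide power2_eq_square flip: power_mult_distrib)
      finally have "(u (Suc k) z - u k z)\<^sup>2 < ((1/2)^k)\<^sup>2" .
      then have "\<bar>u (Suc k) z - u k z\<bar> \<le> \<bar>(1/2::real)^k\<bar>"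
        by (simp only: abs_le_square_iff)
      then show "norm (u (Suc k) z - u k z) \<le> (1/2)^k" by simp
    qed
    then have "summable (\<lambda>k. u (Suc k) z - u k z)"
      by (rule summable_comparison_test_ev) auto
    then have "(\<lambda>m. \<Sum>k<m. u (Suc k) z - u k z) \<longlonglongrightarrow> (\<Sum>k. u (Suc k) z - u k z)"
      by (rule summable_LIMSEQ)
    then have "(\<lambda>m. u m z - u 0 z) \<longlonglongrightarrow> (\<Sum>k. u (Suc k) z - u k z)"
      by (simp add: sum_lessThan_telescope[of "\<lambda>k. u k z"])
    then have "(\<lambda>m. (u m z - u 0 z) + u 0 z) \<longlonglongrightarrow> (\<Sum>k. u (Suc k) z - u k z) + u 0 z"
      by (intro tendsto_add) auto
    then show "convergent (\<lambda>k. u k z)" by (auto simp: convergent_def)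
  qed
  define f where "f z = lim (\<lambda>k. u k z)" for z
  have fm[measurable]: "f \<in> borel_measurable M" unfolding f_def by measurable
  have AElim: "AE z in M. (\<lambda>k. u k z) \<longlonglongrightarrow> f z"
    using AEconv by eventually_elim (simp add: f_def convergent_LIMSEQ_iff)
  have bnd: "integrable M (\<lambda>z. (f z - u n z)\<^sup>2) \<and> (\<integral>z. (f z - u n z)\<^sup>2 \<partial>M) \<le> (1/8)^n" for n
  proof (rule nn_le_imp_int)
    have "(\<integral>\<^sup>+z. ennreal ((f z - u n z)\<^sup>2) \<partial>M) = (\<integral>\<^sup>+z. liminf (\<lambda>m. ennreal ((u m z - u n z)\<^sup>2)) \<partial>M)"
    proof (rule nn_integral_cong_AE)
      show "AE z in M. ennreal ((f z - u n z)\<^sup>2) = liminf (\<lambda>m. ennreal ((u m z - u n z)\<^sup>2))"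
        using AElim
      proof eventually_elim
        case (elim z)
        have "(\<lambda>m. ennreal ((u m z - u n z)\<^sup>2)) \<longlonglongrightarrow> ennreal ((f z - u n z)\<^sup>2)"
          by (intro tendsto_ennrealI tendsto_intros elim)
        then show ?case by (intro lim_imp_Liminf[symmetric]) auto
      qed
    qed
    also have "\<dots> \<le> liminf (\<lambda>m. \<integral>\<^sup>+z. ennreal ((u m z - u n z)\<^sup>2) \<partial>M)"
      by (rule nn_integral_liminf) measurable
    also have "\<dots> \<le> ennreal ((1/8)^n)"
    proof (rule Liminf_le)
      show "\<forall>\<^sub>F m in sequentially. (\<integral>\<^sup>+z. ennreal ((u m z - u n z)\<^sup>2) \<partial>M) \<le> ennreal ((1/8)^n)"
        unfolding eventually_sequentially
      proof (intro exI allI impI)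
        fix m assume "n \<le> m"
        have "(\<integral>\<^sup>+z. ennreal ((u m z - u n z)\<^sup>2) \<partial>M) = ennreal (\<integral>z. (u m z - u n z)\<^sup>2 \<partial>M)"
          by (rule nn_integral_eq_integral[OF isq]) auto
        then show "(\<integral>\<^sup>+z. ennreal ((u m z - u n z)\<^sup>2) \<partial>M) \<le> ennreal ((1/8)^n)"
          using cauchy[OF \<open>n \<le> m\<close>] by (simp add: ennreal_leI)
      qed
    qed simp
    finally show "(\<integral>\<^sup>+z. ennreal ((f z - u n z)\<^sup>2) \<partial>M) \<le> ennreal ((1/8)^n)" .
  qed auto
  have "integrable M (\<lambda>z. (1 * (f z - u 0 z) + 1 * u 0 z)\<^sup>2)"
    by (rule int_sq_lin) (use bnd sq in auto)
  then have "integrable M (\<lambda>z. (f z)\<^sup>2)" by simp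
  then show ?thesis using fm bnd by blast
qed


lemma riesz_rep:
  fixes L :: "('a \<Rightarrow> real) \<Rightarrow> real"
  assumes P: "prob_space M"
    and T: "\<And>g. g \<in> T \<Longrightarrow> g \<in> borel_measurable M \<and> integrable M (\<lambda>z. (g z)\<^sup>2)"
    and T0: "(\<lambda>z. 0) \<in> T"
    and Tlin: "\<And>f g a b. f \<in> T \<Longrightarrow> g \<in> T \<Longrightarrow> (\<lambda>z. a * f z + b * g z) \<in> T"
    and Tclosed: "\<And>g. g \<in> borel_measurable M \<Longrightarrow> integrable M (\<lambda>z. (g z)\<^sup>2) \<Longrightarrow>
                     (\<forall>e>0. \<exists>f\<in>T. (\<integral>z. (g z - f z)\<^sup>2 \<partial>M) < e) \<Longrightarrow> g \<in> T"
    and Llin: "\<And>f g a b. f \<in> T \<Longrightarrow> g \<in> T \<Longrightarrow> L (\<lambda>z. a * f z + b * g z) = a * L f + b * L g"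
    and Lbnd: "\<And>f. f \<in> T \<Longrightarrow> \<bar>L f\<bar> \<le> C * sqrt (\<integral>z. (f z)\<^sup>2 \<partial>M)"
  shows "\<exists>g\<in>T. \<forall>s\<in>T. L s = (\<integral>z. s z * g z \<partial>M)"
proof -
  define \<Phi> where "\<Phi> g = (\<integral>z. (g z)\<^sup>2 \<partial>M) - 2 * L g" for g
  have lowb: "- C\<^sup>2 \<le> \<Phi> g" if "g \<in> T" for g
  proof -
    define x where "x = sqrt (\<integral>z. (g z)\<^sup>2 \<partial>M)"
    have x2: "x\<^sup>2 = (\<integral>z. (g z)\<^sup>2 \<partial>M)" unfolding x_def by simp
    have "L g \<le> C * x" using Lbnd[OF that] unfolding x_def by simp
    then have "\<Phi> g \<ge> x\<^sup>2 - 2 * (C * x)" unfolding \<Phi>_def x2 by simp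
    moreover have "x\<^sup>2 - 2 * (C * x) \<ge> - C\<^sup>2"
      using zero_le_power2[of "x - C"] by (simp add: power2_eq_square algebra_simps)
    ultimately show ?thesis by simp
  qed
  define m0 where "m0 = Inf (\<Phi> ` T)"
  have bdd: "bdd_below (\<Phi> ` T)" using lowb by (auto intro!: bdd_belowI[where m="- C\<^sup>2"])
  have ne: "\<Phi> ` T \<noteq> {}" using T0 by auto
  have m0le: "m0 \<le> \<Phi> g" if "g \<in> T" for g
    unfolding m0_def using bdd that by (auto intro!: cInf_lower)
  define \<epsilon> where "\<epsilon> n = (1/8::real)^n / 4" for n
  have \<epsilon>pos: "\<epsilon> n > 0" for n unfolding \<epsilon>_def by simp
  have "\<exists>g\<in>T. \<Phi> g < m0 + \<epsilon> n" for n
  proof -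
    have "Inf (\<Phi> ` T) < m0 + \<epsilon> n" using \<epsilon>pos[of n] unfolding m0_def by simp
    from cInf_lessD[OF ne this] show ?thesis by auto
  qed
  then obtain u where uT: "\<And>n. u n \<in> T" and uP: "\<And>n. \<Phi> (u n) < m0 + \<epsilon> n" by metis
  have um[measurable]: "\<And>n. u n \<in> borel_measurable M" and usq: "\<And>n. integrable M (\<lambda>z. (u n z)\<^sup>2)"
    using T[OF uT] by auto
  have para: "(\<integral>z. (a z - b z)\<^sup>2 \<partial>M) = 2 * (\<Phi> a + \<Phi> b - 2 * \<Phi> (\<lambda>z. (1/2) * a z + (1/2) * b z))"
    if "a \<in> T" "b \<in> T" for a b
  proof -
    have am: "a \<in> borel_measurable M" "integrable M (\<lambda>z. (a z)\<^sup>2)" using T[OF that(1)] by auto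
    have bm: "b \<in> borel_measurable M" "integrable M (\<lambda>z. (b z)\<^sup>2)" using T[OF that(2)] by auto
    have e1: "(\<integral>z. (a z - b z)\<^sup>2 \<partial>M) = (\<integral>z. (1 * a z + (-1) * b z)\<^sup>2 \<partial>M)" by simp
    show ?thesis
      unfolding e1 \<Phi>_def Llin[OF that]
      unfolding int_sq_lin_expand[OF am(1) bm(1) am(2) bm(2)]
      by (simp add: power2_eq_square algebra_simps)
  qed
  have cauchy: "(\<integral>z. (u m z - u n z)\<^sup>2 \<partial>M) \<le> (1/8)^n" if "n \<le> m" for n m
  proof -
    have h: "(\<lambda>z. (1/2) * u m z + (1/2) * u n z) \<in> T" by (rule Tlin[OF uT uT])
    have "\<epsilon> m \<le> \<epsilon> n" unfolding \<epsilon>_def using that by (simp add: power_decreasing divide_right_mono)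
    have "(\<integral>z. (u m z - u n z)\<^sup>2 \<partial>M) = 2 * (\<Phi> (u m) + \<Phi> (u n) - 2 * \<Phi> (\<lambda>z. (1/2) * u m z + (1/2) * u n z))"
      by (rule para[OF uT uT])
    also have "\<dots> \<le> 2 * ((m0 + \<epsilon> m) + (m0 + \<epsilon> n) - 2 * m0)"
      using uP[of m] uP[of n] m0le[OF h] by simp
    also have "\<dots> \<le> 4 * \<epsilon> n" using \<open>\<epsilon> m \<le> \<epsilon> n\<close> by simp
    finally show ?thesis unfolding \<epsilon>_def by simp
  qed
  obtain f where fm[measurable]: "f \<in> borel_measurable M" and fsq: "integrable M (\<lambda>z. (f z)\<^sup>2)"
    and fu: "\<And>n. integrable M (\<lambda>z. (f z - u n z)\<^sup>2) \<and> (\<integral>z. (f z - u n z)\<^sup>2 \<partial>M) \<le> (1/8)^n"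
    using riesz_fischer[OF P um usq cauchy] by blast
  have fT: "f \<in> T"
  proof (rule Tclosed[OF fm fsq], intro allI impI)
    fix e :: real assume "e > 0"
    obtain n where "(1/8::real)^n < e" using real_arch_pow_inv[OF \<open>e > 0\<close>, of "1/8"] by auto
    then show "\<exists>g\<in>T. (\<integral>z. (f z - g z)\<^sup>2 \<partial>M) < e" using fu[of n] uT[of n] by force
  qed
  have "L s = (\<integral>z. s z * f z \<partial>M)" if sT: "s \<in> T" for s
  proof -
    have sm[measurable]: "s \<in> borel_measurable M" and ssq: "integrable M (\<lambda>z. (s z)\<^sup>2)" using T[OF sT] by auto
    define S2 where "S2 = (\<integral>z. (s z)\<^sup>2 \<partial>M)"
    define c where "c = (\<integral>z. s z * f z \<partial>M) - L s"
    have quad: "0 \<le> 2 * t * c + t\<^sup>2 * S2" for t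
    proof -
      define a where "a n = \<epsilon> n + 2 * \<bar>t\<bar> * sqrt S2 * sqrt ((1/8)^n)" for n
      have a0: "a \<longlonglongrightarrow> 0"
      proof -
        have "(\<lambda>n. \<epsilon> n + 2 * \<bar>t\<bar> * sqrt S2 * sqrt ((1/8)^n)) \<longlonglongrightarrow> 0 / 4 + 2 * \<bar>t\<bar> * sqrt S2 * sqrt 0"
          unfolding \<epsilon>_def by (intro tendsto_intros LIMSEQ_power_zero) auto
        then show ?thesis unfolding a_def by simp
      qed
      have lb: "- a n \<le> 2 * t * c + t\<^sup>2 * S2" for n
      proof -
        have v: "(\<lambda>z. 1 * u n z + t * s z) \<in> T" by (rule Tlin[OF uT sT])
        have "m0 \<le> \<Phi> (\<lambda>z. 1 * u n z + t * s z)" by (rule m0le[OF v])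
        also have "\<Phi> (\<lambda>z. 1 * u n z + t * s z) = \<Phi> (u n) + 2 * t * ((\<integral>z. u n z * s z \<partial>M) - L s) + t\<^sup>2 * S2"
          unfolding \<Phi>_def Llin[OF uT sT] int_sq_lin_expand[OF um sm usq ssq] S2_def
          by (simp add: algebra_simps)
        finally have q1: "- \<epsilon> n \<le> 2 * t * ((\<integral>z. u n z * s z \<partial>M) - L s) + t\<^sup>2 * S2"
          using uP[of n] by simp
        have "(\<integral>z. u n z * s z \<partial>M) - (\<integral>z. s z * f z \<partial>M) = (\<integral>z. s z * (u n z - f z) \<partial>M)"
        proof -
          have "(\<integral>z. s z * (u n z - f z) \<partial>M) = (\<integral>z. s z * u n z - s z * f z \<partial>M)"
            by (simp add: algebra_simps)
          also have "\<dots> = (\<integral>z. s z * u n z \<partial>M) - (\<integral>z. s z * f z \<partial>M)"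
            by (rule Bochner_Integration.integral_diff) (auto intro!: int_prod um sm usq ssq fsq)
          finally show ?thesis by (simp add: mult.commute)
        qed
        moreover have "\<bar>\<integral>z. s z * (u n z - f z) \<partial>M\<bar> \<le> sqrt S2 * sqrt ((1/8)^n)"
        proof -
          have d: "integrable M (\<lambda>z. (u n z - f z)\<^sup>2)" using fu[of n] by (simp add: power2_commute)
          have "\<bar>\<integral>z. s z * (u n z - f z) \<partial>M\<bar> \<le> sqrt S2 * sqrt (\<integral>z. (u n z - f z)\<^sup>2 \<partial>M)"
            unfolding S2_def by (rule cs_abs) (auto intro: ssq d)
          also have "\<dots> \<le> sqrt S2 * sqrt ((1/8)^n)"
            using fu[of n] by (intro mult_left_mono real_sqrt_le_mono) (auto simp: power2_commute S2_def)
          finally show ?thesis .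
        qed
        ultimately have "\<bar>((\<integral>z. u n z * s z \<partial>M) - L s) - c\<bar> \<le> sqrt S2 * sqrt ((1/8)^n)"
          unfolding c_def by simp
        then have "\<bar>2 * t * ((\<integral>z. u n z * s z \<partial>M) - L s) - 2 * t * c\<bar> \<le> 2 * \<bar>t\<bar> * (sqrt S2 * sqrt ((1/8)^n))"
          by (simp add: abs_mult right_diff_distrib[symmetric] mult.assoc mult_left_mono)
        then show ?thesis using q1 unfolding a_def by (simp add: abs_le_iff mult.assoc)
      qed
      have "(\<lambda>n. - a n) \<longlonglongrightarrow> - 0" by (intro tendsto_minus a0)
      then show ?thesis using lb by (intro LIMSEQ_le_const2[where X="\<lambda>n. - a n"]) auto
    qed
    have "(- c)\<^sup>2 \<le> 0 * S2"
      by (rule quad_nonneg_imp) (use quad in \<open>auto simp: S2_def\<close>)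
    then have "c = 0" by simp
    then show ?thesis unfolding c_def by simp
  qed
  then show ?thesis using fT by blast
qed


lemma dens_facts:
  fixes lam Q :: "'z::topological_space measure"
  assumes lam: "sigma_finite_measure lam" "sets lam = sets borel"
    and Q: "prob_space Q" "sets Q = sets borel" "absolutely_continuous lam Q"
  shows "dens lam Q \<in> borel_measurable lam" "\<And>z. 0 \<le> dens lam Q z"
    "density lam (\<lambda>z. ennreal (dens lam Q z)) = Q"
    "integrable lam (dens lam Q)" "(\<integral>z. dens lam Q z \<partial>lam) = 1"
proof -
  interpret sigma_finite_measure lam by (rule lam(1))
  have sQ: "sets Q = sets lam" using lam Q by simp
  show m: "dens lam Q \<in> borel_measurable lam" unfolding dens_def by measurable
  show nn: "\<And>z. 0 \<le> dens lam Q z" unfolding dens_def by simp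
  have fin: "AE x in lam. RN_deriv lam Q x \<noteq> \<infinity>"
    by (rule RN_deriv_finite[OF _ Q(3) sQ]) (use Q(1) prob_space_imp_sigma_finite in auto)
  have "density lam (\<lambda>z. ennreal (dens lam Q z)) = density lam (RN_deriv lam Q)"
    by (rule density_cong) (use fin in \<open>auto simp: dens_def less_top intro!: ennreal_enn2real\<close>)
  also have "\<dots> = Q" by (rule density_RN_deriv[OF Q(3) sQ])
  finally show d: "density lam (\<lambda>z. ennreal (dens lam Q z)) = Q" .
  interpret Qp: prob_space Q by (rule Q(1))
  have "integrable Q (\<lambda>z. 1::real)" by simp
  then have "integrable (density lam (\<lambda>z. ennreal (dens lam Q z))) (\<lambda>z. 1::real)" using d by simp
  then show "integrable lam (dens lam Q)"
    by (subst (asm) integrable_density) (use m nn in auto)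
  have "(\<integral>z. 1 \<partial>Q) = (1::real)" by (simp add: Qp.prob_space)
  then have "(\<integral>z. 1 \<partial>(density lam (\<lambda>z. ennreal (dens lam Q z)))) = (1::real)" using d by simp
  then show "(\<integral>z. dens lam Q z \<partial>lam) = 1"
    by (subst (asm) integral_density) (use m nn in auto)
qed


lemma score_mean_zero:
  fixes lam :: "'z::topological_space measure"
  assumes lam: "sigma_finite_measure lam" "sets lam = sets borel"
    and model: "\<forall>P\<in>Pm. prob_space P \<and> sets P = sets borel \<and> absolutely_continuous lam P"
    and P0: "P0 \<in> Pm"
    and qmd: "qmd_path lam Pm P0 Pe s"
  shows "(\<integral>z. s z \<partial>P0) = 0"
proof -
  have mP0: "prob_space P0" "sets P0 = sets borel" "absolutely_continuous lam P0" using model P0 by auto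
  define p where "p = dens lam P0"
  note pf = dens_facts[OF lam mP0, folded p_def]
  have pm[measurable]: "p \<in> borel_measurable lam" and pnn: "\<And>z. 0 \<le> p z" using pf by auto
  have sl: "sets P0 = sets lam" using mP0 lam by simp
  have sm[measurable]: "s \<in> borel_measurable lam"
    using qmd unfolding qmd_path_def using measurable_cong_sets[OF sl refl] by auto
  have smP: "s \<in> borel_measurable P0" and ssqP: "integrable P0 (\<lambda>z. (s z)\<^sup>2)"
    using qmd unfolding qmd_path_def by auto
  define a where "a z = s z * sqrt (p z) / 2" for z
  have am[measurable]: "a \<in> borel_measurable lam" unfolding a_def by measurable
  have dP0: "density lam (\<lambda>z. ennreal (p z)) = P0" using pf by simp
  have sqp_sq: "integrable lam (\<lambda>z. (sqrt (p z))\<^sup>2)" using pf pnn by simp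
  have sqpm[measurable]: "(\<lambda>z. sqrt (p z)) \<in> borel_measurable lam" by measurable
  have asq: "integrable lam (\<lambda>z. (a z)\<^sup>2)"
  proof -
    have "integrable (density lam (\<lambda>z. ennreal (p z))) (\<lambda>z. (s z)\<^sup>2 / 4)" using dP0 ssqP by simp
    then have "integrable lam (\<lambda>z. p z *\<^sub>R ((s z)\<^sup>2 / 4))"
      by (subst (asm) integrable_density) (auto simp: pnn)
    moreover have "(\<lambda>z. p z *\<^sub>R ((s z)\<^sup>2 / 4)) = (\<lambda>z. (a z)\<^sup>2)"
      by (auto simp: a_def power_mult_distrib pnn power2_eq_square)
    ultimately show ?thesis by simp
  qed
  define \<mu> where "\<mu> = (\<integral>z. s z \<partial>P0)"
  have amu: "(\<integral>z. a z * sqrt (p z) \<partial>lam) = \<mu> / 2"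
  proof -
    have "\<mu> = (\<integral>z. s z \<partial>(density lam (\<lambda>z. ennreal (p z))))" unfolding \<mu>_def using dP0 by simp
    also have "\<dots> = (\<integral>z. p z *\<^sub>R s z \<partial>lam)" by (rule integral_density) (auto simp: pnn)
    also have "\<dots> = (\<integral>z. 2 * (a z * sqrt (p z)) \<partial>lam)"
      by (rule Bochner_Integration.integral_cong) (auto simp: a_def pnn)
    also have "\<dots> = 2 * (\<integral>z. a z * sqrt (p z) \<partial>lam)" by simp
    finally show ?thesis by simp
  qed
  define A where "A = (\<integral>z. (a z)\<^sup>2 \<partial>lam)"
  have A0: "A \<ge> 0" unfolding A_def by simp
  have key: "\<bar>\<mu>\<bar> \<le> \<delta> * (4 + 2 * A)" if \<delta>: "0 < \<delta>" "\<delta> \<le> 1" for \<delta>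
  proof -
    define R where "R e = (\<integral>\<^sup>+ z. ennreal ((sqrt (dens lam (Pe e) z) - sqrt (dens lam P0 z)
               - e * s z * sqrt (dens lam P0 z) / 2)\<^sup>2) \<partial>lam) / ennreal (e\<^sup>2)" for e
    have lim: "(R \<longlongrightarrow> 0) (at 0)" and evP: "\<forall>\<^sub>F e in nhds 0. Pe e \<in> Pm"
      using qmd unfolding qmd_path_def R_def by auto
    have e1: "\<forall>\<^sub>F e in at 0. R e < ennreal (\<delta>\<^sup>2)"
      by (rule order_tendstoD(2)[OF lim]) (use \<delta> in simp)
    have e2: "\<forall>\<^sub>F e in at 0. Pe e \<in> Pm"
      using evP unfolding eventually_at_filter by eventually_elim auto
    have "\<forall>\<^sub>F e in at (0::real). R e < ennreal (\<delta>\<^sup>2) \<and> Pe e \<in> Pm"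
      using e1 e2 by (rule eventually_conj)
    then obtain d where d: "d > 0" and dP: "\<And>x::real. x \<noteq> 0 \<Longrightarrow> dist x 0 < d \<Longrightarrow> R x < ennreal (\<delta>\<^sup>2) \<and> Pe x \<in> Pm"
      unfolding eventually_at by auto
    define e where "e = min d \<delta> / 2"
    have e0: "e > 0" "e < \<delta>" "e < d" unfolding e_def using d \<delta> by auto
    have Re: "R e < ennreal (\<delta>\<^sup>2)" and Pe: "Pe e \<in> Pm" using dP[of e] e0 by auto
    have mQ: "prob_space (Pe e)" "sets (Pe e) = sets borel" "absolutely_continuous lam (Pe e)" using model Pe by auto
    define q where "q = dens lam (Pe e)"
    note qf = dens_facts[OF lam mQ, folded q_def]
    have qm[measurable]: "q \<in> borel_measurable lam" and qnn: "\<And>z. 0 \<le> q z" using qf by auto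
    define r where "r z = sqrt (q z) - sqrt (p z) - e * a z" for z
    have rm[measurable]: "r \<in> borel_measurable lam" unfolding r_def by measurable
    have "(\<integral>\<^sup>+ z. ennreal ((r z)\<^sup>2) \<partial>lam) / ennreal (e\<^sup>2) < ennreal (\<delta>\<^sup>2)"
      using Re unfolding R_def r_def q_def p_def a_def by (simp add: algebra_simps)
    then have "(\<integral>\<^sup>+ z. ennreal ((r z)\<^sup>2) \<partial>lam) < ennreal (\<delta>\<^sup>2) * ennreal (e\<^sup>2)"
      using e0 by (subst (asm) divide_less_ennreal) auto
    then have "(\<integral>\<^sup>+ z. ennreal ((r z)\<^sup>2) \<partial>lam) \<le> ennreal (\<delta>\<^sup>2 * e\<^sup>2)"
      by (simp add: ennreal_mult)
    then have rI: "integrable lam (\<lambda>z. (r z)\<^sup>2) \<and> (\<integral>z. (r z)\<^sup>2 \<partial>lam) \<le> \<delta>\<^sup>2 * e\<^sup>2"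
      by (intro nn_le_imp_int) auto
    define Rr where "Rr = (\<integral>z. (r z)\<^sup>2 \<partial>lam)"
    have Rr0: "Rr \<ge> 0" unfolding Rr_def by simp
    have "sqrt Rr \<le> sqrt ((\<delta> * e)\<^sup>2)"
      using rI unfolding Rr_def by (intro real_sqrt_le_mono) (simp add: power_mult_distrib)
    then have sqRr: "sqrt Rr \<le> \<delta> * e" using e0 \<delta> by simp
    have rsq: "integrable lam (\<lambda>z. (r z)\<^sup>2)" using rI by simp
    have sqq_sq: "integrable lam (\<lambda>z. (sqrt (q z))\<^sup>2)" using qf qnn by simp
    define u where "u z = e * a z + r z" for z
    have um[measurable]: "u \<in> borel_measurable lam" unfolding u_def by measurable
    have usq: "integrable lam (\<lambda>z. (u z)\<^sup>2)" unfolding u_def by (rule int_sq_lin[OF am rm asq rsq, of e 1, simplified])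
    have ident: "q z - p z = 2 * (e * (a z * sqrt (p z))) + 2 * (r z * sqrt (p z)) + (u z)\<^sup>2" for z
    proof -
      have "q z = (sqrt (q z))\<^sup>2" "p z = (sqrt (p z))\<^sup>2" using qnn pnn by auto
      moreover have "sqrt (q z) = u z + sqrt (p z)" unfolding u_def r_def by simp
      ultimately show ?thesis unfolding u_def by (simp add: power2_eq_square algebra_simps)
    qed
    have iap: "integrable lam (\<lambda>z. a z * sqrt (p z))" by (rule int_prod[OF am sqpm asq sqp_sq])
    have irp: "integrable lam (\<lambda>z. r z * sqrt (p z))" by (rule int_prod[OF rm sqpm rsq sqp_sq])
    have "0 = (\<integral>z. q z \<partial>lam) - (\<integral>z. p z \<partial>lam)" using qf pf by simp
    also have "\<dots> = (\<integral>z. q z - p z \<partial>lam)"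
      by (rule Bochner_Integration.integral_diff[symmetric]) (use qf pf in auto)
    also have "\<dots> = (\<integral>z. 2 * (e * (a z * sqrt (p z))) + 2 * (r z * sqrt (p z)) + (u z)\<^sup>2 \<partial>lam)"
      by (simp add: ident)
    also have "\<dots> = 2 * (e * (\<integral>z. a z * sqrt (p z) \<partial>lam)) + 2 * (\<integral>z. r z * sqrt (p z) \<partial>lam) + (\<integral>z. (u z)\<^sup>2 \<partial>lam)"
      using iap irp usq by simp
    finally have eq: "e * \<mu> = - 2 * (\<integral>z. r z * sqrt (p z) \<partial>lam) - (\<integral>z. (u z)\<^sup>2 \<partial>lam)"
      unfolding amu by simp
    have b1: "\<bar>\<integral>z. r z * sqrt (p z) \<partial>lam\<bar> \<le> sqrt Rr * 1"
      using cs_abs[OF rm sqpm rsq sqp_sq] pf pnn unfolding Rr_def by simp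
    have b2: "(\<integral>z. (u z)\<^sup>2 \<partial>lam) \<le> (\<integral>z. 2 * e\<^sup>2 * (a z)\<^sup>2 + 2 * (r z)\<^sup>2 \<partial>lam)"
    proof (rule integral_mono)
      show "integrable lam (\<lambda>z. 2 * e\<^sup>2 * (a z)\<^sup>2 + 2 * (r z)\<^sup>2)" using asq rsq by simp
      fix z
      have "0 \<le> (e * a z - r z)\<^sup>2" by simp
      then show "(u z)\<^sup>2 \<le> 2 * e\<^sup>2 * (a z)\<^sup>2 + 2 * (r z)\<^sup>2"
        unfolding u_def by (simp add: power2_eq_square algebra_simps)
    qed (rule usq)
    have b3: "(\<integral>z. 2 * e\<^sup>2 * (a z)\<^sup>2 + 2 * (r z)\<^sup>2 \<partial>lam) = 2 * e\<^sup>2 * A + 2 * Rr"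
      unfolding A_def Rr_def using asq rsq by simp
    have u0: "0 \<le> (\<integral>z. (u z)\<^sup>2 \<partial>lam)" by simp
    have "e * \<bar>\<mu>\<bar> = \<bar>e * \<mu>\<bar>" using e0 by (simp add: abs_mult)
    also have "\<dots> \<le> 2 * \<bar>\<integral>z. r z * sqrt (p z) \<partial>lam\<bar> + (\<integral>z. (u z)\<^sup>2 \<partial>lam)"
      unfolding eq using u0 by linarith
    also have "\<dots> \<le> 2 * sqrt Rr + (2 * e\<^sup>2 * A + 2 * Rr)"
      using b1 b2 b3 by linarith
    also have "\<dots> \<le> 2 * (\<delta> * e) + (2 * e\<^sup>2 * A + 2 * (\<delta>\<^sup>2 * e\<^sup>2))"
      using sqRr rI unfolding Rr_def by (intro add_mono) auto
    also have "\<dots> = e * (2 * \<delta> + 2 * e * A + 2 * \<delta>\<^sup>2 * e)" by (simp add: power2_eq_square algebra_simps)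
    finally have "\<bar>\<mu>\<bar> \<le> 2 * \<delta> + 2 * e * A + 2 * \<delta>\<^sup>2 * e" using e0 by simp
    also have "\<dots> \<le> 2 * \<delta> + 2 * \<delta> * A + 2 * \<delta>"
    proof -
      have "2 * e * A \<le> 2 * \<delta> * A" using e0 A0 by (simp add: mult_right_mono)
      moreover have "\<delta>\<^sup>2 * e \<le> \<delta>"
      proof -
        have "\<delta>\<^sup>2 \<le> \<delta>" using \<delta> by (simp add: power2_eq_square mult_left_le)
        then have "\<delta>\<^sup>2 * e \<le> \<delta> * 1" using e0 \<delta> by (intro mult_mono) auto
        then show ?thesis by simp
      qed
      ultimately show ?thesis by simp
    qed
    finally show ?thesis by (simp add: algebra_simps)
  qed
  have "\<mu> = 0"
  proof (rule ccontr)
    assume "\<mu> \<noteq> 0"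
    define \<delta> where "\<delta> = min 1 (\<bar>\<mu>\<bar> / (2 * (4 + 2 * A)))"
    have "0 < \<delta>" "\<delta> \<le> 1" unfolding \<delta>_def using \<open>\<mu> \<noteq> 0\<close> A0 by auto
    from key[OF this] have "\<bar>\<mu>\<bar> \<le> \<delta> * (4 + 2 * A)" .
    also have "\<dots> \<le> \<bar>\<mu>\<bar> / (2 * (4 + 2 * A)) * (4 + 2 * A)"
      unfolding \<delta>_def using A0 by (intro mult_right_mono) auto
    also have "\<dots> = \<bar>\<mu>\<bar> / 2" using A0 by (simp add: field_simps)
    finally show False using \<open>\<mu> \<noteq> 0\<close> by simp
  qed
  then show ?thesis unfolding \<mu>_def .
qed


lemma sq_imp_int:
  fixes f :: "'a \<Rightarrow> real"
  assumes "prob_space M" and [measurable]: "f \<in> borel_measurable M" and "integrable M (\<lambda>z. (f z)\<^sup>2)"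
  shows "integrable M f"
proof -
  interpret prob_space M by fact
  show ?thesis
  proof (rule Bochner_Integration.integrable_bound)
    show "integrable M (\<lambda>z. 1 + (f z)\<^sup>2)" using assms by auto
    show "AE x in M. norm (f x) \<le> norm (1 + (f x)\<^sup>2)"
    proof (intro AE_I2)
      fix x
      have "\<bar>f x\<bar> \<le> 1 + (f x)\<^sup>2"
      proof (cases "\<bar>f x\<bar> \<le> 1")
        case True then show ?thesis by (smt (verit) zero_le_power2)
      next
        case False
        then have "1 * \<bar>f x\<bar> \<le> \<bar>f x\<bar> * \<bar>f x\<bar>" by (intro mult_right_mono) auto
        also have "\<bar>f x\<bar> * \<bar>f x\<bar> = (f x)\<^sup>2" by (simp add: power2_eq_square abs_mult_self_eq)
        finally show ?thesis by simp
      qed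
      then show "norm (f x) \<le> norm (1 + (f x)\<^sup>2)" by simp
    qed
  qed simp
qed

lemma sq_diff_int:
  fixes f g :: "'a \<Rightarrow> real"
  assumes [measurable]: "f \<in> borel_measurable M" "g \<in> borel_measurable M"
    and "integrable M (\<lambda>z. (f z)\<^sup>2)" "integrable M (\<lambda>z. (g z)\<^sup>2)"
  shows "integrable M (\<lambda>z. (f z - g z)\<^sup>2)"
  using int_sq_lin[OF assms, of 1 "-1"] by simp

lemma sq_tri:
  fixes x y z :: "'a \<Rightarrow> real"
  assumes [measurable]: "x \<in> borel_measurable M" "y \<in> borel_measurable M" "z \<in> borel_measurable M"
    and sx: "integrable M (\<lambda>t. (x t)\<^sup>2)" and sy: "integrable M (\<lambda>t. (y t)\<^sup>2)" and sz: "integrable M (\<lambda>t. (z t)\<^sup>2)"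
  shows "(\<integral>t. (x t - z t)\<^sup>2 \<partial>M) \<le> 2 * (\<integral>t. (x t - y t)\<^sup>2 \<partial>M) + 2 * (\<integral>t. (y t - z t)\<^sup>2 \<partial>M)"
proof -
  have i1: "integrable M (\<lambda>t. (x t - y t)\<^sup>2)" by (rule sq_diff_int) (use sx sy in auto)
  have i2: "integrable M (\<lambda>t. (y t - z t)\<^sup>2)" by (rule sq_diff_int) (use sy sz in auto)
  have i3: "integrable M (\<lambda>t. (x t - z t)\<^sup>2)" by (rule sq_diff_int) (use sx sz in auto)
  have "(\<integral>t. (x t - z t)\<^sup>2 \<partial>M) \<le> (\<integral>t. 2 * (x t - y t)\<^sup>2 + 2 * (y t - z t)\<^sup>2 \<partial>M)"
  proof (rule integral_mono[OF i3])
    show "integrable M (\<lambda>t. 2 * (x t - y t)\<^sup>2 + 2 * (y t - z t)\<^sup>2)" using i1 i2 by simp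
    fix t
    have "0 \<le> (x t - 2 * y t + z t)\<^sup>2" by simp
    then show "(x t - z t)\<^sup>2 \<le> 2 * (x t - y t)\<^sup>2 + 2 * (y t - z t)\<^sup>2"
      by (simp add: power2_eq_square algebra_simps)
  qed
  also have "\<dots> = 2 * (\<integral>t. (x t - y t)\<^sup>2 \<partial>M) + 2 * (\<integral>t. (y t - z t)\<^sup>2 \<partial>M)" using i1 i2 by simp
  finally show ?thesis .
qed

lemma lin_span_add1:
  assumes "f \<in> lin_span_fun S" "g \<in> S"
  shows "(\<lambda>z. f z + c * g z) \<in> lin_span_fun S"
proof -
  obtain k :: nat and d h where h: "\<forall>i<k. h i \<in> S" and f: "f = (\<lambda>z. \<Sum>i<k. d i * h i z)"
    using assms(1) unfolding lin_span_fun_def by blast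
  define d' where "d' = d(k := c)"
  define h' where "h' = h(k := g)"
  have "\<forall>i<Suc k. h' i \<in> S" using h assms(2) unfolding h'_def by (auto simp: less_Suc_eq)
  moreover have "(\<lambda>z. f z + c * g z) = (\<lambda>z. \<Sum>i<Suc k. d' i * h' i z)"
    unfolding f d'_def h'_def by (auto intro!: sum.cong)
  ultimately show ?thesis unfolding lin_span_fun_def mem_Collect_eq
    by (intro exI[where x="Suc k"] exI[where x=d'] exI[where x=h'] conjI)
qed

lemma lin_span_scale:
  assumes "f \<in> lin_span_fun S"
  shows "(\<lambda>z. a * f z) \<in> lin_span_fun S"
proof -
  obtain k :: nat and d h where h: "\<forall>i<k. h i \<in> S" and f: "f = (\<lambda>z. \<Sum>i<k. d i * h i z)"
    using assms(1) unfolding lin_span_fun_def by blast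
  have eq: "(\<lambda>z. a * f z) = (\<lambda>z. \<Sum>i<k. (a * d i) * h i z)"
    unfolding f by (rule ext) (simp only: sum_distrib_left mult.assoc)
  show ?thesis unfolding lin_span_fun_def mem_Collect_eq
    by (rule exI[where x=k], rule exI[where x="\<lambda>i. a * d i"], rule exI[where x=h]) (use h eq in simp)
qed

lemma lin_span_lin:
  assumes "f \<in> lin_span_fun S" "g \<in> lin_span_fun S"
  shows "(\<lambda>z. a * f z + b * g z) \<in> lin_span_fun S"
proof -
  obtain k :: nat and d h where h: "\<forall>i<k. h i \<in> S" and g: "g = (\<lambda>z. \<Sum>i<k. d i * h i z)"
    using assms(2) unfolding lin_span_fun_def by blast
  have "\<forall>k'\<le>k. (\<lambda>z. a * f z + b * (\<Sum>i<k'. d i * h i z)) \<in> lin_span_fun S"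
  proof (intro allI impI)
    fix k' assume "k' \<le> k"
    then show "(\<lambda>z. a * f z + b * (\<Sum>i<k'. d i * h i z)) \<in> lin_span_fun S"
    proof (induction k')
      case 0 then show ?case using lin_span_scale[OF assms(1), of a] by simp
    next
      case (Suc k')
      have ih: "(\<lambda>z. a * f z + b * (\<Sum>i<k'. d i * h i z)) \<in> lin_span_fun S" using Suc by simp
      have hk: "h k' \<in> S" using h Suc.prems by simp
      have "(\<lambda>z. (a * f z + b * (\<Sum>i<k'. d i * h i z)) + (b * d k') * h k' z) \<in> lin_span_fun S"
        by (rule lin_span_add1[OF ih hk])
      then show ?case by (simp add: algebra_simps)
    qed
  qed
  then show ?thesis unfolding g by auto
qed

lemma lin_span_props:
  assumes P: "prob_space M"
    and S: "\<And>s. s \<in> S \<Longrightarrow> s \<in> borel_measurable M \<and> integrable M (\<lambda>z. (s z)\<^sup>2) \<and> (\<integral>z. s z \<partial>M) = 0"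
    and f: "f \<in> lin_span_fun S"
  shows "f \<in> borel_measurable M \<and> integrable M (\<lambda>z. (f z)\<^sup>2) \<and> (\<integral>z. f z \<partial>M) = 0"
proof -
  obtain k :: nat and d h where h: "\<forall>i<k. h i \<in> S" and fe: "f = (\<lambda>z. \<Sum>i<k. d i * h i z)"
    using f unfolding lin_span_fun_def by blast
  have "\<forall>k'\<le>k. (\<lambda>z. \<Sum>i<k'. d i * h i z) \<in> borel_measurable M \<and> integrable M (\<lambda>z. (\<Sum>i<k'. d i * h i z)\<^sup>2)
           \<and> (\<integral>z. (\<Sum>i<k'. d i * h i z) \<partial>M) = 0"
  proof (intro allI impI)
    fix k' assume "k' \<le> k"
    then show "(\<lambda>z. \<Sum>i<k'. d i * h i z) \<in> borel_measurable M \<and> integrable M (\<lambda>z. (\<Sum>i<k'. d i * h i z)\<^sup>2)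
           \<and> (\<integral>z. (\<Sum>i<k'. d i * h i z) \<partial>M) = 0"
    proof (induction k')
      case 0 then show ?case by simp
    next
      case (Suc k')
      have hk: "h k' \<in> borel_measurable M" "integrable M (\<lambda>z. (h k' z)\<^sup>2)" "(\<integral>z. h k' z \<partial>M) = 0"
        using S h Suc.prems by auto
      have IH: "(\<lambda>z. \<Sum>i<k'. d i * h i z) \<in> borel_measurable M" "integrable M (\<lambda>z. (\<Sum>i<k'. d i * h i z)\<^sup>2)"
        "(\<integral>z. (\<Sum>i<k'. d i * h i z) \<partial>M) = 0" using Suc by auto
      have e: "\<And>z. (\<Sum>i<Suc k'. d i * h i z) = 1 * (\<Sum>i<k'. d i * h i z) + d k' * h k' z"
        by simp
      have m: "(\<lambda>z. 1 * (\<Sum>i<k'. d i * h i z) + d k' * h k' z) \<in> borel_measurable M"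
        using IH(1) hk(1) by measurable
      have sq: "integrable M (\<lambda>z. (1 * (\<Sum>i<k'. d i * h i z) + d k' * h k' z)\<^sup>2)"
        by (rule int_sq_lin[OF IH(1) hk(1) IH(2) hk(2)])
      have i1: "integrable M (\<lambda>z. \<Sum>i<k'. d i * h i z)" by (rule sq_imp_int[OF P IH(1,2)])
      have i2: "integrable M (h k')" by (rule sq_imp_int[OF P hk(1,2)])
      have "(\<integral>z. 1 * (\<Sum>i<k'. d i * h i z) + d k' * h k' z \<partial>M) = 
          (\<integral>z. (\<Sum>i<k'. d i * h i z) \<partial>M) + (\<integral>z. d k' * h k' z \<partial>M)"
      proof -
        have i3: "integrable M (\<lambda>z. d k' * h k' z)" using i2 by (rule integrable_mult_right)
        have "(\<integral>z. 1 * (\<Sum>i<k'. d i * h i z) + d k' * h k' z \<partial>M) = (\<integral>z. (\<Sum>i<k'. d i * h i z) + d k' * h k' z \<partial>M)"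
          by (simp only: mult_1)
        also have "\<dots> = (\<integral>z. (\<Sum>i<k'. d i * h i z) \<partial>M) + (\<integral>z. d k' * h k' z \<partial>M)"
          by (rule Bochner_Integration.integral_add[OF i1 i3])
        finally show ?thesis .
      qed
      also have "\<dots> = 0" using IH(3) hk(3) by (simp only: integral_mult_right_zero)
      finally have i0: "(\<integral>z. 1 * (\<Sum>i<k'. d i * h i z) + d k' * h k' z \<partial>M) = 0" .
      show ?case unfolding e using m sq i0 by (intro conjI)
    qed
  qed
  from this[rule_format, OF order_refl] show ?thesis by (simp only: fe)
qed


locale tsetup =
  fixes lam :: "'z::topological_space measure" and Pm P0
  assumes lam: "sigma_finite_measure lam" "sets lam = sets borel"
    and model: "\<forall>P\<in>Pm. prob_space P \<and> sets P = sets borel \<and> absolutely_continuous lam P"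
    and P0: "P0 \<in> Pm"
begin

lemma P0prob: "prob_space P0" using model P0 by auto

lemma score_props:
  assumes "s \<in> scores lam Pm P0"
  shows "s \<in> borel_measurable P0 \<and> integrable P0 (\<lambda>z. (s z)\<^sup>2) \<and> (\<integral>z. s z \<partial>P0) = 0"
proof -
  obtain Pe where q: "qmd_path lam Pm P0 Pe s" using assms unfolding scores_def by auto
  then show ?thesis using score_mean_zero[OF lam model P0 q] unfolding qmd_path_def by auto
qed

lemma span_props:
  assumes "f \<in> lin_span_fun (scores lam Pm P0)"
  shows "f \<in> borel_measurable P0 \<and> integrable P0 (\<lambda>z. (f z)\<^sup>2) \<and> (\<integral>z. f z \<partial>P0) = 0"
  by (rule lin_span_props[OF P0prob score_props assms])

lemma T_sq:
  assumes "g \<in> tangent_space lam Pm P0"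
  shows "g \<in> borel_measurable P0 \<and> integrable P0 (\<lambda>z. (g z)\<^sup>2)"
  using assms unfolding tangent_space_def by auto

lemma T_0: "(\<lambda>z. 0) \<in> tangent_space lam Pm P0"
proof -
  have "(\<lambda>z. 0::real) \<in> lin_span_fun (scores lam Pm P0)"
    unfolding lin_span_fun_def by (intro CollectI exI[where x=0]) auto
  then show ?thesis unfolding tangent_space_def by force
qed

lemma T_lin:
  assumes f: "f \<in> tangent_space lam Pm P0" and g: "g \<in> tangent_space lam Pm P0"
  shows "(\<lambda>z. a * f z + b * g z) \<in> tangent_space lam Pm P0"
proof -
  have fm[measurable]: "f \<in> borel_measurable P0" and fs: "integrable P0 (\<lambda>z. (f z)\<^sup>2)" using T_sq[OF f] by auto
  have gm[measurable]: "g \<in> borel_measurable P0" and gs: "integrable P0 (\<lambda>z. (g z)\<^sup>2)" using T_sq[OF g] by auto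
  have "\<exists>h\<in>lin_span_fun (scores lam Pm P0). (\<integral>z. (a * f z + b * g z - h z)\<^sup>2 \<partial>P0) < e" if e: "e > 0" for e
  proof -
    define E where "E = e / (4 * (a\<^sup>2 + b\<^sup>2) + 1)"
    have E0: "E > 0" unfolding E_def using e by (simp add: add_nonneg_pos)
    obtain f' where f': "f' \<in> lin_span_fun (scores lam Pm P0)" "(\<integral>z. (f z - f' z)\<^sup>2 \<partial>P0) < E"
      using f E0 unfolding tangent_space_def by blast
    obtain g' where g': "g' \<in> lin_span_fun (scores lam Pm P0)" "(\<integral>z. (g z - g' z)\<^sup>2 \<partial>P0) < E"
      using g E0 unfolding tangent_space_def by blast
    have f'm[measurable]: "f' \<in> borel_measurable P0" and f's: "integrable P0 (\<lambda>z. (f' z)\<^sup>2)" using span_props[OF f'(1)] by auto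
    have g'm[measurable]: "g' \<in> borel_measurable P0" and g's: "integrable P0 (\<lambda>z. (g' z)\<^sup>2)" using span_props[OF g'(1)] by auto
    have h: "(\<lambda>z. a * f' z + b * g' z) \<in> lin_span_fun (scores lam Pm P0)" by (rule lin_span_lin[OF f'(1) g'(1)])
    have d1: "integrable P0 (\<lambda>z. (f z - f' z)\<^sup>2)" by (rule sq_diff_int) (use fs f's in auto)
    have d2: "integrable P0 (\<lambda>z. (g z - g' z)\<^sup>2)" by (rule sq_diff_int) (use gs g's in auto)
    have d12: "integrable P0 (\<lambda>z. (a * (f z - f' z) + b * (g z - g' z))\<^sup>2)"
      by (rule int_sq_lin) (use d1 d2 in auto)
    have "(\<integral>z. (a * f z + b * g z - (a * f' z + b * g' z))\<^sup>2 \<partial>P0) = (\<integral>z. (a * (f z - f' z) + b * (g z - g' z))\<^sup>2 \<partial>P0)"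
      by (simp add: algebra_simps)
    also have "\<dots> \<le> (\<integral>z. 2 * a\<^sup>2 * (f z - f' z)\<^sup>2 + 2 * b\<^sup>2 * (g z - g' z)\<^sup>2 \<partial>P0)"
    proof (rule integral_mono[OF d12])
      show "integrable P0 (\<lambda>z. 2 * a\<^sup>2 * (f z - f' z)\<^sup>2 + 2 * b\<^sup>2 * (g z - g' z)\<^sup>2)" using d1 d2 by simp
      fix z
      have "0 \<le> (a * (f z - f' z) - b * (g z - g' z))\<^sup>2" by simp
      then show "(a * (f z - f' z) + b * (g z - g' z))\<^sup>2 \<le> 2 * a\<^sup>2 * (f z - f' z)\<^sup>2 + 2 * b\<^sup>2 * (g z - g' z)\<^sup>2"
        by (simp add: power2_eq_square algebra_simps)
    qed
    also have "\<dots> = 2 * a\<^sup>2 * (\<integral>z. (f z - f' z)\<^sup>2 \<partial>P0) + 2 * b\<^sup>2 * (\<integral>z. (g z - g' z)\<^sup>2 \<partial>P0)"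
      using d1 d2 by simp
    also have "\<dots> \<le> 2 * a\<^sup>2 * E + 2 * b\<^sup>2 * E"
      using f'(2) g'(2) by (intro add_mono mult_left_mono) auto
    also have "\<dots> < e"
    proof -
      have "2 * a\<^sup>2 * E + 2 * b\<^sup>2 * E = (2 * a\<^sup>2 + 2 * b\<^sup>2) * E" by (simp add: algebra_simps)
      also have "\<dots> = e * ((2 * a\<^sup>2 + 2 * b\<^sup>2) / (4 * (a\<^sup>2 + b\<^sup>2) + 1))"
        unfolding E_def by (simp add: ac_simps)
      also have "\<dots> < e * 1"
      proof (intro mult_strict_left_mono e)
        have D: "4 * (a\<^sup>2 + b\<^sup>2) + 1 > 0" by (simp add: add_nonneg_pos)
        have "0 \<le> a\<^sup>2" "0 \<le> b\<^sup>2" by simp_all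
        then have "2 * a\<^sup>2 + 2 * b\<^sup>2 < 4 * (a\<^sup>2 + b\<^sup>2) + 1" unfolding distrib_left by linarith
        then show "(2 * a\<^sup>2 + 2 * b\<^sup>2) / (4 * (a\<^sup>2 + b\<^sup>2) + 1) < 1"
          using D by (simp only: divide_less_eq_1_pos)
      qed
      finally show ?thesis by simp
    qed
    finally show ?thesis using h by force
  qed
  moreover have "integrable P0 (\<lambda>z. (a * f z + b * g z)\<^sup>2)" by (rule int_sq_lin[OF fm gm fs gs])
  ultimately show ?thesis unfolding tangent_space_def by auto
qed

lemma T_closed:
  assumes gm[measurable]: "g \<in> borel_measurable P0" and gs: "integrable P0 (\<lambda>z. (g z)\<^sup>2)"
    and ap: "\<forall>e>0. \<exists>f\<in>tangent_space lam Pm P0. (\<integral>z. (g z - f z)\<^sup>2 \<partial>P0) < e"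
  shows "g \<in> tangent_space lam Pm P0"
proof -
  have "\<exists>h\<in>lin_span_fun (scores lam Pm P0). (\<integral>z. (g z - h z)\<^sup>2 \<partial>P0) < e" if e: "e > 0" for e
  proof -
    obtain f where f: "f \<in> tangent_space lam Pm P0" "(\<integral>z. (g z - f z)\<^sup>2 \<partial>P0) < e / 4"
    proof -
      have "e / 4 > 0" using e by simp
      then show ?thesis using ap that by blast
    qed
    obtain f' where f': "f' \<in> lin_span_fun (scores lam Pm P0)" "(\<integral>z. (f z - f' z)\<^sup>2 \<partial>P0) < e / 4"
    proof -
      have "e / 4 > 0" using e by simp
      then show ?thesis using f(1) that unfolding tangent_space_def by blast
    qed
    have fm: "f \<in> borel_measurable P0" and fs: "integrable P0 (\<lambda>z. (f z)\<^sup>2)" using T_sq[OF f(1)] by auto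
    have f'm: "f' \<in> borel_measurable P0" and f's: "integrable P0 (\<lambda>z. (f' z)\<^sup>2)" using span_props[OF f'(1)] by auto
    have "(\<integral>z. (g z - f' z)\<^sup>2 \<partial>P0) \<le> 2 * (\<integral>z. (g z - f z)\<^sup>2 \<partial>P0) + 2 * (\<integral>z. (f z - f' z)\<^sup>2 \<partial>P0)"
      by (rule sq_tri[OF gm fm f'm gs fs f's])
    also have "\<dots> < e" using f(2) f'(2) by simp
    finally show ?thesis using f'(1) by blast
  qed
  then show ?thesis unfolding tangent_space_def using gm gs by auto
qed

lemma T_mean:
  assumes g: "g \<in> tangent_space lam Pm P0"
  shows "(\<integral>z. g z \<partial>P0) = 0"
proof (rule ccontr)
  interpret prob_space P0 by (rule P0prob)
  assume ne: "(\<integral>z. g z \<partial>P0) \<noteq> 0"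
  have gm[measurable]: "g \<in> borel_measurable P0" and gs: "integrable P0 (\<lambda>z. (g z)\<^sup>2)" using T_sq[OF g] by auto
  define e where "e = (\<integral>z. g z \<partial>P0)\<^sup>2"
  have "e > 0" unfolding e_def using ne by simp
  then obtain f' where f': "f' \<in> lin_span_fun (scores lam Pm P0)" "(\<integral>z. (g z - f' z)\<^sup>2 \<partial>P0) < e"
    using g unfolding tangent_space_def by blast
  have f'm[measurable]: "f' \<in> borel_measurable P0" and f's: "integrable P0 (\<lambda>z. (f' z)\<^sup>2)"
    and f'0: "(\<integral>z. f' z \<partial>P0) = 0" using span_props[OF f'(1)] by auto
  have d: "integrable P0 (\<lambda>z. (g z - f' z)\<^sup>2)" by (rule sq_diff_int) (use gs f's in auto)
  have ig: "integrable P0 g" by (rule sq_imp_int[OF P0prob gm gs])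
  have if': "integrable P0 f'" by (rule sq_imp_int[OF P0prob f'm f's])
  have "(\<integral>z. g z \<partial>P0) = (\<integral>z. (g z - f' z) * 1 \<partial>P0)" using ig if' f'0 by simp
  then have "\<bar>\<integral>z. g z \<partial>P0\<bar> \<le> sqrt (\<integral>z. (g z - f' z)\<^sup>2 \<partial>P0) * sqrt (\<integral>z. 1\<^sup>2 \<partial>P0)"
    using cs_abs[of "\<lambda>z. g z - f' z" P0 "\<lambda>z. 1"] d by simp
  also have "\<dots> < sqrt e" using f'(2) by (simp add: prob_space)
  also have "sqrt e = \<bar>\<integral>z. g z \<partial>P0\<bar>" unfolding e_def by simp
  finally show False by simp
qed

end


context tsetup
begin

lemma pd_op_deriv:
  assumes "pathwise_differentiable lam Pm nu P0"
  shows "pd_deriv lam Pm nu P0 (pd_op lam Pm nu P0)"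
  using assms unfolding pathwise_differentiable_def pd_op_def by (rule someI_ex)

lemma pd_bound:
  fixes nu :: "'z measure \<Rightarrow> 'h::real_inner"
  assumes "pathwise_differentiable lam Pm nu P0"
  obtains C where "C \<ge> 0" "\<And>f. f \<in> tangent_space lam Pm P0 \<Longrightarrow>
      norm (pd_op lam Pm nu P0 f) \<le> C * sqrt (\<integral>z. (f z)\<^sup>2 \<partial>P0)"
proof -
  obtain C where C: "\<forall>f\<in>tangent_space lam Pm P0. norm (pd_op lam Pm nu P0 f) \<le> C * sqrt (\<integral>z. (f z)\<^sup>2 \<partial>P0)"
    using pd_op_deriv[OF assms] unfolding pd_deriv_def by blast
  have "norm (pd_op lam Pm nu P0 f) \<le> max C 0 * sqrt (\<integral>z. (f z)\<^sup>2 \<partial>P0)" if "f \<in> tangent_space lam Pm P0" for f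
  proof -
    have "C * sqrt (\<integral>z. (f z)\<^sup>2 \<partial>P0) \<le> max C 0 * sqrt (\<integral>z. (f z)\<^sup>2 \<partial>P0)"
      by (intro mult_right_mono) auto
    then show ?thesis using C that by fastforce
  qed
  then show ?thesis using that[of "max C 0"] by auto
qed

lemma eio_props:
  fixes nu :: "'z measure \<Rightarrow> 'h::real_inner"
  assumes pd: "pathwise_differentiable lam Pm nu P0"
  shows "eio lam Pm nu P0 h \<in> tangent_space lam Pm P0 \<and>
    (\<forall>s\<in>tangent_space lam Pm P0. inner (pd_op lam Pm nu P0 s) h = (\<integral>z. s z * eio lam Pm nu P0 h z \<partial>P0))"
proof -
  define D where "D = pd_op lam Pm nu P0"
  define T where "T = tangent_space lam Pm P0"
  have Dlin: "\<And>f g a b. f \<in> T \<Longrightarrow> g \<in> T \<Longrightarrow> D (\<lambda>z. a * f z + b * g z) = a *\<^sub>R D f + b *\<^sub>R D g"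
    using pd_op_deriv[OF pd] unfolding pd_deriv_def D_def T_def by blast
  obtain C where C0: "C \<ge> 0" and C: "\<And>f. f \<in> T \<Longrightarrow> norm (D f) \<le> C * sqrt (\<integral>z. (f z)\<^sup>2 \<partial>P0)"
    using pd_bound[OF pd] unfolding D_def T_def by blast
  have "\<exists>g\<in>T. \<forall>s\<in>T. inner (D s) h = (\<integral>z. s z * g z \<partial>P0)"
  proof (rule riesz_rep[OF P0prob, where L="\<lambda>s. inner (D s) h" and C="C * norm h"])
    show "\<And>g. g \<in> T \<Longrightarrow> g \<in> borel_measurable P0 \<and> integrable P0 (\<lambda>z. (g z)\<^sup>2)"
      unfolding T_def by (rule T_sq)
    show "(\<lambda>z. 0) \<in> T" unfolding T_def by (rule T_0)
    show "\<And>f g a b. f \<in> T \<Longrightarrow> g \<in> T \<Longrightarrow> (\<lambda>z. a * f z + b * g z) \<in> T"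
      unfolding T_def by (rule T_lin)
    show "\<And>g. g \<in> borel_measurable P0 \<Longrightarrow> integrable P0 (\<lambda>z. (g z)\<^sup>2) \<Longrightarrow>
                     (\<forall>e>0. \<exists>f\<in>T. (\<integral>z. (g z - f z)\<^sup>2 \<partial>P0) < e) \<Longrightarrow> g \<in> T"
      unfolding T_def by (rule T_closed)
    show "\<And>f g a b. f \<in> T \<Longrightarrow> g \<in> T \<Longrightarrow> inner (D (\<lambda>z. a * f z + b * g z)) h = a * inner (D f) h + b * inner (D g) h"
      using Dlin by (simp add: inner_add_left)
    show "\<bar>inner (D f) h\<bar> \<le> C * norm h * sqrt (\<integral>z. (f z)\<^sup>2 \<partial>P0)" if "f \<in> T" for f
    proof -
      have "\<bar>inner (D f) h\<bar> \<le> norm (D f) * norm h" by (rule Cauchy_Schwarz_ineq2)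
      also have "\<dots> \<le> (C * sqrt (\<integral>z. (f z)\<^sup>2 \<partial>P0)) * norm h"
        by (intro mult_right_mono C that) simp
      finally show ?thesis by (simp add: ac_simps)
    qed
  qed
  then have "\<exists>g. g \<in> T \<and> (\<forall>s\<in>T. inner (D s) h = (\<integral>z. s z * g z \<partial>P0))" by blast
  from someI_ex[OF this] show ?thesis unfolding eio_def D_def T_def .
qed

lemma eio_bound:
  fixes nu :: "'z measure \<Rightarrow> 'h::real_inner"
  assumes pd: "pathwise_differentiable lam Pm nu P0"
  obtains C where "C \<ge> 0" "\<And>h. (\<integral>z. (eio lam Pm nu P0 h z)\<^sup>2 \<partial>P0) \<le> C\<^sup>2 * (norm h)\<^sup>2"
proof -
  obtain C where C0: "C \<ge> 0" and C: "\<And>f. f \<in> tangent_space lam Pm P0 \<Longrightarrow>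
      norm (pd_op lam Pm nu P0 f) \<le> C * sqrt (\<integral>z. (f z)\<^sup>2 \<partial>P0)"
    using pd_bound[OF pd] by blast
  have "(\<integral>z. (eio lam Pm nu P0 h z)\<^sup>2 \<partial>P0) \<le> C\<^sup>2 * (norm h)\<^sup>2" for h
  proof -
    define g where "g = eio lam Pm nu P0 h"
    have gT: "g \<in> tangent_space lam Pm P0" and rep: "\<And>s. s \<in> tangent_space lam Pm P0 \<Longrightarrow>
        inner (pd_op lam Pm nu P0 s) h = (\<integral>z. s z * g z \<partial>P0)"
      using eio_props[OF pd, of h] unfolding g_def by auto
    define x where "x = sqrt (\<integral>z. (g z)\<^sup>2 \<partial>P0)"
    have x0: "x \<ge> 0" unfolding x_def by simp
    have x2: "x\<^sup>2 = (\<integral>z. (g z)\<^sup>2 \<partial>P0)" unfolding x_def by simp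
    have "x\<^sup>2 = inner (pd_op lam Pm nu P0 g) h" unfolding x2 rep[OF gT] by (simp add: power2_eq_square)
    also have "\<dots> \<le> norm (pd_op lam Pm nu P0 g) * norm h" by (rule norm_cauchy_schwarz)
    also have "\<dots> \<le> (C * x) * norm h" unfolding x_def by (intro mult_right_mono C gT) simp
    finally have le: "x * x \<le> x * (C * norm h)" by (simp add: power2_eq_square ac_simps)
    have "x \<le> C * norm h"
    proof (cases "x = 0")
      case True then show ?thesis using C0 by simp
    next
      case False then show ?thesis using le x0 by (simp add: mult_le_cancel_left)
    qed
    then have "x\<^sup>2 \<le> (C * norm h)\<^sup>2" using x0 by (intro power_mono) auto
    then show ?thesis unfolding g_def[symmetric] x2 by (simp add: power_mult_distrib)
  qed
  then show ?thesis using that[OF C0] by blast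
qed

end


lemma pyth_fin:
  fixes hb :: "nat \<Rightarrow> 'h::real_inner"
  assumes orth: "\<forall>j k. j \<noteq> k \<longrightarrow> inner (hb j) (hb k) = 0"
  shows "(norm (\<Sum>k\<in>F. d k *\<^sub>R hb k))\<^sup>2 = (\<Sum>k\<in>F. (d k)\<^sup>2 * (norm (hb k))\<^sup>2)"
proof -
  have ip: "inner (hb j) (hb k) = (if k = j then (norm (hb j))\<^sup>2 else 0)" for j k
    using orth by (auto simp: power2_norm_eq_inner)
  have "(norm (\<Sum>k\<in>F. d k *\<^sub>R hb k))\<^sup>2 = inner (\<Sum>j\<in>F. d j *\<^sub>R hb j) (\<Sum>k\<in>F. d k *\<^sub>R hb k)"
    by (simp add: power2_norm_eq_inner)
  also have "\<dots> = (\<Sum>j\<in>F. \<Sum>k\<in>F. d j * d k * inner (hb j) (hb k))"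
    unfolding inner_sum_left unfolding inner_sum_right by (simp add: sum_distrib_left mult.assoc mult.left_commute)
  also have "\<dots> = (\<Sum>j\<in>F. \<Sum>k\<in>F. (if k = j then d j * d k * (norm (hb j))\<^sup>2 else 0))"
    by (intro sum.cong refl) (simp add: ip)
  also have "\<dots> = (\<Sum>j\<in>F. (d j)\<^sup>2 * (norm (hb j))\<^sup>2)"
  proof (cases "finite F")
    case True then show ?thesis by (simp add: sum.delta' power2_eq_square)
  qed simp
  finally show ?thesis .
qed

lemma bessel_sums:
  fixes hb :: "nat \<Rightarrow> 'h::real_inner"
  assumes orth: "\<forall>j k. j \<noteq> k \<longrightarrow> inner (hb j) (hb k) = 0"
    and s: "(\<lambda>k. d k *\<^sub>R hb k) sums x"
  shows "(\<lambda>k. (d k)\<^sup>2 * (norm (hb k))\<^sup>2) sums (norm x)\<^sup>2"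
proof -
  have "(\<lambda>n. \<Sum>k<n. d k *\<^sub>R hb k) \<longlonglongrightarrow> x" using s unfolding sums_def .
  then have "(\<lambda>n. (norm (\<Sum>k<n. d k *\<^sub>R hb k))\<^sup>2) \<longlonglongrightarrow> (norm x)\<^sup>2"
    by (intro tendsto_intros)
  then show ?thesis unfolding sums_def pyth_fin[OF orth] .
qed

lemma summable_from_sq:
  fixes hb :: "nat \<Rightarrow> 'h::{real_inner,banach}"
  assumes orth: "\<forall>j k. j \<noteq> k \<longrightarrow> inner (hb j) (hb k) = 0"
    and s: "summable (\<lambda>k. (d k)\<^sup>2 * (norm (hb k))\<^sup>2)"
  shows "summable (\<lambda>k. d k *\<^sub>R hb k)"
  unfolding summable_Cauchy
proof (intro allI impI)
  fix e :: real assume e: "e > 0"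
  then have "e\<^sup>2 > 0" by simp
  with s obtain N where N: "\<forall>m\<ge>N. \<forall>n. norm (\<Sum>k\<in>{m..<n}. (d k)\<^sup>2 * (norm (hb k))\<^sup>2) < e\<^sup>2"
    unfolding summable_Cauchy by blast
  have "norm (\<Sum>k\<in>{m..<n}. d k *\<^sub>R hb k) < e" if "m \<ge> N" for m n
  proof -
    have "(norm (\<Sum>k\<in>{m..<n}. d k *\<^sub>R hb k))\<^sup>2 = (\<Sum>k\<in>{m..<n}. (d k)\<^sup>2 * (norm (hb k))\<^sup>2)"
      by (rule pyth_fin[OF orth])
    also have "\<dots> \<le> norm (\<Sum>k\<in>{m..<n}. (d k)\<^sup>2 * (norm (hb k))\<^sup>2)" by simp
    also have "\<dots> < e\<^sup>2" using N that by blast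
    finally show ?thesis using e by (simp add: power_less_imp_less_base less_imp_le)
  qed
  then show "\<exists>N. \<forall>m\<ge>N. \<forall>n. norm (\<Sum>k\<in>{m..<n}. d k *\<^sub>R hb k) < e" by blast
qed

lemma inner_sums:
  fixes hb :: "nat \<Rightarrow> 'h::real_inner"
  assumes orth: "\<forall>j k. j \<noteq> k \<longrightarrow> inner (hb j) (hb k) = 0"
    and s: "(\<lambda>k. d k *\<^sub>R hb k) sums x"
  shows "inner x (hb j) = d j * (norm (hb j))\<^sup>2"
proof -
  have "(\<lambda>k. inner (d k *\<^sub>R hb k) (hb j)) sums inner x (hb j)"
    by (rule bounded_linear.sums[OF bounded_linear_inner_left s])
  moreover have "(\<lambda>k. inner (d k *\<^sub>R hb k) (hb j)) = (\<lambda>k. if k = j then d j * (norm (hb j))\<^sup>2 else 0)"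
    using orth by (auto simp: power2_norm_eq_inner)
  ultimately have "(\<lambda>k. if k = j then d j * (norm (hb j))\<^sup>2 else 0) sums inner x (hb j)" by simp
  moreover have "(\<lambda>k. if k = j then d j * (norm (hb j))\<^sup>2 else 0) sums (d j * (norm (hb j))\<^sup>2)"
    using sums_single[of j "\<lambda>_. d j * (norm (hb j))\<^sup>2"] by simp
  ultimately show ?thesis using sums_unique2 by blast
qed

lemma summable_iff_sq:
  fixes hb :: "nat \<Rightarrow> 'h::{real_inner,banach}"
  assumes orth: "\<forall>j k. j \<noteq> k \<longrightarrow> inner (hb j) (hb k) = 0"
  shows "summable (\<lambda>k. d k *\<^sub>R hb k) \<longleftrightarrow> summable (\<lambda>k. (d k)\<^sup>2 * (norm (hb k))\<^sup>2)"
proof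
  assume "summable (\<lambda>k. d k *\<^sub>R hb k)"
  then obtain x where "(\<lambda>k. d k *\<^sub>R hb k) sums x" by (auto simp: summable_def)
  from bessel_sums[OF orth this] show "summable (\<lambda>k. (d k)\<^sup>2 * (norm (hb k))\<^sup>2)" by (auto simp: summable_def)
qed (rule summable_from_sq[OF orth])

lemma norm_sq_le_sum:
  fixes hb :: "nat \<Rightarrow> 'h::{real_inner,banach}"
  assumes orth: "\<forall>j k. j \<noteq> k \<longrightarrow> inner (hb j) (hb k) = 0"
    and unit: "\<forall>k. hb k = 0 \<or> norm (hb k) = 1"
    and s: "(\<lambda>k. d k *\<^sub>R hb k) sums x"
  shows "ennreal ((norm x)\<^sup>2) \<le> (\<Sum>k. ennreal ((d k)\<^sup>2))"
proof -
  have "(\<Sum>k. ennreal ((d k)\<^sup>2 * (norm (hb k))\<^sup>2)) = ennreal ((norm x)\<^sup>2)"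
    by (rule suminf_ennreal_eq[OF _ bessel_sums[OF orth s]]) simp
  moreover have "(\<Sum>k. ennreal ((d k)\<^sup>2 * (norm (hb k))\<^sup>2)) \<le> (\<Sum>k. ennreal ((d k)\<^sup>2))"
  proof (intro suminf_le allI ennreal_leI)
    fix k
    have "(norm (hb k))\<^sup>2 \<le> 1" using unit[rule_format, of k] by auto
    then show "(d k)\<^sup>2 * (norm (hb k))\<^sup>2 \<le> (d k)\<^sup>2" by (simp add: mult_left_le)
  qed auto
  ultimately show ?thesis by simp
qed


locale esetup = tsetup lam Pm P0 for lam :: "'z::topological_space measure" and Pm P0 +
  fixes nu :: "'z measure \<Rightarrow> 'h::{real_inner,banach,second_countable_topology}" and hb :: "nat \<Rightarrow> 'h"
  assumes pd: "pathwise_differentiable lam Pm nu P0"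
    and unit: "\<forall>k. hb k = 0 \<or> norm (hb k) = 1"
    and orth: "\<forall>j k. j \<noteq> k \<longrightarrow> inner (hb j) (hb k) = 0"
    and onb: "\<forall>x. (\<lambda>k. inner x (hb k) *\<^sub>R hb k) sums x"
begin

definition g :: "nat \<Rightarrow> 'z \<Rightarrow> real" where "g k = eio lam Pm nu P0 (hb k)"

lemma g_T: "g k \<in> tangent_space lam Pm P0"
  unfolding g_def using eio_props[OF pd] by blast

lemma g_meas[measurable]: "g k \<in> borel_measurable P0"
  using T_sq[OF g_T] by blast

lemma g_sq: "integrable P0 (\<lambda>z. (g k z)\<^sup>2)"
  using T_sq[OF g_T] by blast

lemma g_mean: "(\<integral>z. g k z \<partial>P0) = 0"
  by (rule T_mean[OF g_T])

definition CC :: real where "CC = (SOME C. C \<ge> 0 \<and> (\<forall>h. (\<integral>z. (eio lam Pm nu P0 h z)\<^sup>2 \<partial>P0) \<le> C\<^sup>2 * (norm h)\<^sup>2))"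

lemma CC: "CC \<ge> 0" "\<And>h. (\<integral>z. (eio lam Pm nu P0 h z)\<^sup>2 \<partial>P0) \<le> CC\<^sup>2 * (norm h)\<^sup>2"
proof -
  obtain C where "C \<ge> 0" "\<And>h. (\<integral>z. (eio lam Pm nu P0 h z)\<^sup>2 \<partial>P0) \<le> C\<^sup>2 * (norm h)\<^sup>2"
    using eio_bound[OF pd] by blast
  then have "\<exists>C. C \<ge> 0 \<and> (\<forall>h. (\<integral>z. (eio lam Pm nu P0 h z)\<^sup>2 \<partial>P0) \<le> C\<^sup>2 * (norm h)\<^sup>2)" by blast
  from someI_ex[OF this] show "CC \<ge> 0" "\<And>h. (\<integral>z. (eio lam Pm nu P0 h z)\<^sup>2 \<partial>P0) \<le> CC\<^sup>2 * (norm h)\<^sup>2"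
    unfolding CC_def by auto
qed

lemma g_bound: "(\<integral>z. (g k z)\<^sup>2 \<partial>P0) \<le> CC\<^sup>2"
proof -
  have "(\<integral>z. (g k z)\<^sup>2 \<partial>P0) \<le> CC\<^sup>2 * (norm (hb k))\<^sup>2" unfolding g_def by (rule CC(2))
  also have "\<dots> \<le> CC\<^sup>2 * 1" using unit[rule_format, of k] by (intro mult_left_mono) auto
  finally show ?thesis by simp
qed

lemma phi_eq: "reg_eif lam Pm nu hb P0 beta = (\<lambda>z. if summable (\<lambda>k. (beta k * g k z) *\<^sub>R hb k)
      then (\<Sum>k. (beta k * g k z) *\<^sub>R hb k) else 0)"
  unfolding reg_eif_def g_def by (rule ext) simp

definition Sm :: "(nat \<Rightarrow> real) \<Rightarrow> 'z set" where
  "Sm beta = {z. summable (\<lambda>k. (beta k * g k z) *\<^sub>R hb k)}"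

lemma summable_iff_ennreal:
  fixes f :: "nat \<Rightarrow> real"
  assumes "\<And>k. 0 \<le> f k"
  shows "summable f \<longleftrightarrow> (\<Sum>k. ennreal (f k)) \<noteq> \<top>"
  using summable_suminf_not_top[of f] ennreal_suminf_neq_top[of f] assms by blast

lemma Sm_alt: "Sm beta = {z. (\<Sum>k. ennreal ((beta k * g k z)\<^sup>2 * (norm (hb k))\<^sup>2)) \<noteq> \<top>}"
proof -
  have "summable (\<lambda>k. (beta k * g k z) *\<^sub>R hb k) \<longleftrightarrow> (\<Sum>k. ennreal ((beta k * g k z)\<^sup>2 * (norm (hb k))\<^sup>2)) \<noteq> \<top>" for z
    unfolding summable_iff_sq[OF orth] by (rule summable_iff_ennreal) simp
  then show ?thesis unfolding Sm_def by blast
qed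

lemma Sm_sets[measurable]: "Sm beta \<inter> space P0 \<in> sets P0"
proof -
  have "Sm beta \<inter> space P0 = {z \<in> space P0. (\<Sum>k. ennreal ((beta k * g k z)\<^sup>2 * (norm (hb k))\<^sup>2)) \<noteq> \<top>}"
    unfolding Sm_alt by auto
  also have "\<dots> \<in> sets P0" by measurable
  finally show ?thesis .
qed

lemma phi_meas[measurable]: "reg_eif lam Pm nu hb P0 beta \<in> borel_measurable P0"
proof -
  have "reg_eif lam Pm nu hb P0 beta = (\<lambda>z. if z \<in> Sm beta then (\<Sum>k. (beta k * g k z) *\<^sub>R hb k) else 0)"
    unfolding phi_eq Sm_def by auto
  also have "\<dots> \<in> borel_measurable P0"
    by (rule measurable_If_set) (auto intro!: Sm_sets)
  finally show ?thesis .
qed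

lemma phi_norm: "ennreal ((norm (reg_eif lam Pm nu hb P0 beta z))\<^sup>2) \<le> (\<Sum>k. ennreal ((beta k * g k z)\<^sup>2))"
proof (cases "summable (\<lambda>k. (beta k * g k z) *\<^sub>R hb k)")
  case True
  then have "(\<lambda>k. (beta k * g k z) *\<^sub>R hb k) sums reg_eif lam Pm nu hb P0 beta z"
    unfolding phi_eq by (simp add: summable_sums)
  then show ?thesis by (rule norm_sq_le_sum[OF orth unit])
next
  case False
  then show ?thesis unfolding phi_eq by simp
qed

lemma phi_sums:
  assumes "z \<in> Sm beta"
  shows "(\<lambda>k. (beta k * g k z) *\<^sub>R hb k) sums reg_eif lam Pm nu hb P0 beta z"
  using assms unfolding phi_eq Sm_def by (simp add: summable_sums)

lemma sq_sum_int:
  assumes bs: "summable (\<lambda>k. (beta k)\<^sup>2)"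
  shows "(\<integral>\<^sup>+z. (\<Sum>k. ennreal ((beta k * g k z)\<^sup>2)) \<partial>P0) \<le> ennreal (CC\<^sup>2 * (\<Sum>k. (beta k)\<^sup>2))"
proof -
  have "(\<integral>\<^sup>+z. (\<Sum>k. ennreal ((beta k * g k z)\<^sup>2)) \<partial>P0) = (\<Sum>k. \<integral>\<^sup>+z. ennreal ((beta k * g k z)\<^sup>2) \<partial>P0)"
    by (rule nn_integral_suminf) measurable
  also have "\<dots> \<le> (\<Sum>k. ennreal (CC\<^sup>2 * (beta k)\<^sup>2))"
  proof (rule suminf_le)
    fix k
    have i: "integrable P0 (\<lambda>z. (beta k * g k z)\<^sup>2)" using g_sq[of k] by (simp add: power_mult_distrib)
    have "(\<integral>\<^sup>+z. ennreal ((beta k * g k z)\<^sup>2) \<partial>P0) = ennreal (\<integral>z. (beta k * g k z)\<^sup>2 \<partial>P0)"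
      by (rule nn_integral_eq_integral[OF i]) simp
    also have "(\<integral>z. (beta k * g k z)\<^sup>2 \<partial>P0) = (beta k)\<^sup>2 * (\<integral>z. (g k z)\<^sup>2 \<partial>P0)"
      by (simp add: power_mult_distrib)
    also have "\<dots> \<le> (beta k)\<^sup>2 * CC\<^sup>2" by (intro mult_left_mono g_bound) simp
    finally show "(\<integral>\<^sup>+z. ennreal ((beta k * g k z)\<^sup>2) \<partial>P0) \<le> ennreal (CC\<^sup>2 * (beta k)\<^sup>2)"
      by (simp add: ac_simps ennreal_leI)
  qed auto
  also have "\<dots> = ennreal (\<Sum>k. CC\<^sup>2 * (beta k)\<^sup>2)"
    by (rule suminf_ennreal2) (auto intro: summable_mult bs)
  also have "\<dots> = ennreal (CC\<^sup>2 * (\<Sum>k. (beta k)\<^sup>2))" using bs by (simp add: suminf_mult)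
  finally show ?thesis .
qed

lemma Sm_AE:
  assumes bs: "summable (\<lambda>k. (beta k)\<^sup>2)"
  shows "AE z in P0. z \<in> Sm beta"
proof -
  have "AE z in P0. (\<Sum>k. ennreal ((beta k * g k z)\<^sup>2)) \<noteq> \<infinity>"
    by (rule nn_integral_PInf_AE) (use sq_sum_int[OF bs] in \<open>auto simp: top_unique\<close>)
  then show ?thesis
  proof eventually_elim
    case (elim z)
    then have "summable (\<lambda>k. (beta k * g k z)\<^sup>2)" by (intro summable_suminf_not_top) auto
    then have "summable (\<lambda>k. (beta k * g k z)\<^sup>2 * (norm (hb k))\<^sup>2)"
    proof (rule summable_comparison_test[rotated], intro exI allI impI)
      fix k
      have "(norm (hb k))\<^sup>2 \<le> 1" using unit[rule_format, of k] by auto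
      then show "norm ((beta k * g k z)\<^sup>2 * (norm (hb k))\<^sup>2) \<le> (beta k * g k z)\<^sup>2"
        by (simp add: mult_left_le)
    qed
    then show ?case unfolding Sm_def using summable_from_sq[OF orth] by auto
  qed
qed

lemma phi_integrable:
  assumes bs: "summable (\<lambda>k. (beta k)\<^sup>2)"
  shows "integrable P0 (reg_eif lam Pm nu hb P0 beta)"
proof (rule integrableI_bounded)
  interpret prob_space P0 by (rule P0prob)
  have "(\<integral>\<^sup>+z. ennreal (norm (reg_eif lam Pm nu hb P0 beta z)) \<partial>P0)
        \<le> (\<integral>\<^sup>+z. 1 + (\<Sum>k. ennreal ((beta k * g k z)\<^sup>2)) \<partial>P0)"
  proof (rule nn_integral_mono)
    fix z
    define x where "x = norm (reg_eif lam Pm nu hb P0 beta z)"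
    have "x \<le> 1 + x\<^sup>2"
    proof (cases "x \<le> 1")
      case True then show ?thesis by (smt (verit) zero_le_power2)
    next
      case False
      then have "1 * x \<le> x * x" by (intro mult_right_mono) auto
      then show ?thesis by (simp add: power2_eq_square)
    qed
    then have "ennreal x \<le> ennreal (1 + x\<^sup>2)" by (rule ennreal_leI)
    also have "\<dots> = 1 + ennreal (x\<^sup>2)" by (simp add: ennreal_plus)
    also have "\<dots> \<le> 1 + (\<Sum>k. ennreal ((beta k * g k z)\<^sup>2))"
      using phi_norm[of beta z] unfolding x_def by (intro add_left_mono) auto
    finally show "ennreal (norm (reg_eif lam Pm nu hb P0 beta z)) \<le> 1 + (\<Sum>k. ennreal ((beta k * g k z)\<^sup>2))"
      unfolding x_def .
  qed
  also have "\<dots> = (\<integral>\<^sup>+z. 1 \<partial>P0) + (\<integral>\<^sup>+z. (\<Sum>k. ennreal ((beta k * g k z)\<^sup>2)) \<partial>P0)"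
    by (rule nn_integral_add) auto
  also have "\<dots> \<le> 1 + ennreal (CC\<^sup>2 * (\<Sum>k. (beta k)\<^sup>2))"
    using sq_sum_int[OF bs] by (intro add_mono) (auto simp: emeasure_space_1)
  also have "\<dots> < \<infinity>" by (simp add: ennreal_plus[symmetric] del: ennreal_plus)
  finally show "(\<integral>\<^sup>+z. ennreal (norm (reg_eif lam Pm nu hb P0 beta z)) \<partial>P0) < \<infinity>" .
qed (rule phi_meas)

lemma phi_mean:
  assumes bs: "summable (\<lambda>k. (beta k)\<^sup>2)"
  shows "(\<integral>z. reg_eif lam Pm nu hb P0 beta z \<partial>P0) = 0"
proof -
  define x where "x = (\<integral>z. reg_eif lam Pm nu hb P0 beta z \<partial>P0)"
  have "inner x (hb j) = 0" for j
  proof -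
    have "inner x (hb j) = (\<integral>z. inner (reg_eif lam Pm nu hb P0 beta z) (hb j) \<partial>P0)"
      unfolding x_def
      by (rule integral_bounded_linear[OF bounded_linear_inner_left phi_integrable[OF bs], symmetric])
    also have "\<dots> = (\<integral>z. (beta j * (norm (hb j))\<^sup>2) * g j z \<partial>P0)"
    proof (rule integral_cong_AE)
      show "AE z in P0. inner (reg_eif lam Pm nu hb P0 beta z) (hb j) = (beta j * (norm (hb j))\<^sup>2) * g j z"
        using Sm_AE[OF bs]
      proof eventually_elim
        case (elim z)
        from inner_sums[OF orth phi_sums[OF elim]] show ?case by simp
      qed
    qed measurable
    also have "\<dots> = 0" using g_mean[of j] by simp
    finally show ?thesis .
  qed
  then have "(\<lambda>k. inner x (hb k) *\<^sub>R hb k) = (\<lambda>k. 0)" by simp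
  then have "(\<lambda>k. 0) sums x" using onb by metis
  then show ?thesis unfolding x_def using sums_zero sums_unique2 by blast
qed

end


lemma prob_Int_ge:
  assumes "prob_space M" "A \<in> sets M" "B \<in> sets M"
  shows "measure M (A \<inter> B) \<ge> measure M A + measure M B - 1"
proof -
  interpret prob_space M by fact
  have d: "measure M (A - B) = measure M A - measure M (A \<inter> B)"
    using assms(2,3) by (rule finite_measure_Diff')
  have "measure M (A - B) \<le> measure M (space M - B)"
    using assms(2,3) sets.sets_into_space[OF assms(2)] by (intro finite_measure_mono) auto
  also have "\<dots> = 1 - measure M B" using assms(3) by (rule prob_compl)
  finally show ?thesis using d by linarith
qed

lemma Op_add:
  assumes P: "prob_space M" and X: "Op F M X r" and Y: "Op F M Y r"
  shows "Op F M (\<lambda>n \<omega>. X n \<omega> + Y n \<omega>) r"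
  unfolding Op_def
proof (intro allI impI)
  fix e :: real assume e: "e > 0"
  then have e2: "e / 2 > 0" by simp
  obtain K1 where K1: "\<forall>\<^sub>F n in F. \<exists>A\<in>sets M. measure M A \<ge> 1 - e/2 \<and> (\<forall>\<omega>\<in>A. norm (X n \<omega>) \<le> K1 * r n)"
    using X e2 unfolding Op_def by blast
  obtain K2 where K2: "\<forall>\<^sub>F n in F. \<exists>A\<in>sets M. measure M A \<ge> 1 - e/2 \<and> (\<forall>\<omega>\<in>A. norm (Y n \<omega>) \<le> K2 * r n)"
    using Y e2 unfolding Op_def by blast
  have "\<forall>\<^sub>F n in F. \<exists>A\<in>sets M. measure M A \<ge> 1 - e \<and> (\<forall>\<omega>\<in>A. norm (X n \<omega> + Y n \<omega>) \<le> (K1 + K2) * r n)"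
    using K1 K2
  proof eventually_elim
    case (elim n)
    then obtain A B where A: "A \<in> sets M" "measure M A \<ge> 1 - e/2" "\<forall>\<omega>\<in>A. norm (X n \<omega>) \<le> K1 * r n"
      and B: "B \<in> sets M" "measure M B \<ge> 1 - e/2" "\<forall>\<omega>\<in>B. norm (Y n \<omega>) \<le> K2 * r n" by blast
    have "measure M (A \<inter> B) \<ge> 1 - e" using prob_Int_ge[OF P A(1) B(1)] A(2) B(2) by linarith
    moreover have "\<forall>\<omega>\<in>A \<inter> B. norm (X n \<omega> + Y n \<omega>) \<le> (K1 + K2) * r n"
    proof
      fix \<omega> assume "\<omega> \<in> A \<inter> B"
      then have "norm (X n \<omega>) \<le> K1 * r n" "norm (Y n \<omega>) \<le> K2 * r n" using A B by auto
      then show "norm (X n \<omega> + Y n \<omega>) \<le> (K1 + K2) * r n"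
        using norm_triangle_ineq[of "X n \<omega>" "Y n \<omega>"] by (simp add: distrib_right)
    qed
    ultimately show ?case using A(1) B(1) by blast
  qed
  then show "\<exists>K. \<forall>\<^sub>F n in F. \<exists>A\<in>sets M. measure M A \<ge> 1 - e \<and> (\<forall>\<omega>\<in>A. norm (X n \<omega> + Y n \<omega>) \<le> K * r n)"
    by blast
qed

lemma Op_scale:
  assumes X: "Op F M X r"
  shows "Op F M (\<lambda>n \<omega>. c *\<^sub>R X n \<omega>) r"
  unfolding Op_def
proof (intro allI impI)
  fix e :: real assume e: "e > 0"
  obtain K where K: "\<forall>\<^sub>F n in F. \<exists>A\<in>sets M. measure M A \<ge> 1 - e \<and> (\<forall>\<omega>\<in>A. norm (X n \<omega>) \<le> K * r n)"
    using X e unfolding Op_def by blast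
  have "\<forall>\<^sub>F n in F. \<exists>A\<in>sets M. measure M A \<ge> 1 - e \<and> (\<forall>\<omega>\<in>A. norm (c *\<^sub>R X n \<omega>) \<le> (\<bar>c\<bar> * K) * r n)"
    using K
  proof eventually_elim
    case (elim n)
    then obtain A where A: "A \<in> sets M" "measure M A \<ge> 1 - e" "\<forall>\<omega>\<in>A. norm (X n \<omega>) \<le> K * r n" by blast
    have "\<forall>\<omega>\<in>A. norm (c *\<^sub>R X n \<omega>) \<le> (\<bar>c\<bar> * K) * r n"
    proof
      fix \<omega> assume "\<omega> \<in> A"
      then have "norm (X n \<omega>) \<le> K * r n" using A by auto
      then have "\<bar>c\<bar> * norm (X n \<omega>) \<le> \<bar>c\<bar> * (K * r n)" by (intro mult_left_mono) auto
      then show "norm (c *\<^sub>R X n \<omega>) \<le> (\<bar>c\<bar> * K) * r n" by (simp add: mult.assoc)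
    qed
    then show ?case using A by blast
  qed
  then show "\<exists>K. \<forall>\<^sub>F n in F. \<exists>A\<in>sets M. measure M A \<ge> 1 - e \<and> (\<forall>\<omega>\<in>A. norm (c *\<^sub>R X n \<omega>) \<le> K * r n)"
    by blast
qed

lemma Op_cong:
  assumes X: "Op F M X r" and ev: "\<forall>\<^sub>F n in F. \<forall>\<omega>\<in>space M. X n \<omega> = Y n \<omega>"
  shows "Op F M Y r"
  unfolding Op_def
proof (intro allI impI)
  fix e :: real assume e: "e > 0"
  obtain K where K: "\<forall>\<^sub>F n in F. \<exists>A\<in>sets M. measure M A \<ge> 1 - e \<and> (\<forall>\<omega>\<in>A. norm (X n \<omega>) \<le> K * r n)"
    using X e unfolding Op_def by blast
  have "\<forall>\<^sub>F n in F. \<exists>A\<in>sets M. measure M A \<ge> 1 - e \<and> (\<forall>\<omega>\<in>A. norm (Y n \<omega>) \<le> K * r n)"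
    using K ev
  proof eventually_elim
    case (elim n)
    then obtain A where A: "A \<in> sets M" "measure M A \<ge> 1 - e" "\<forall>\<omega>\<in>A. norm (X n \<omega>) \<le> K * r n" by blast
    have "\<forall>\<omega>\<in>A. norm (Y n \<omega>) \<le> K * r n"
    proof
      fix \<omega> assume w: "\<omega> \<in> A"
      then have "\<omega> \<in> space M" using sets.sets_into_space[OF A(1)] by blast
      then have "Y n \<omega> = X n \<omega>" using elim(2) by simp
      then show "norm (Y n \<omega>) \<le> K * r n" using A(3) w by simp
    qed
    then show ?case using A by blast
  qed
  then show "\<exists>K. \<forall>\<^sub>F n in F. \<exists>A\<in>sets M. measure M A \<ge> 1 - e \<and> (\<forall>\<omega>\<in>A. norm (Y n \<omega>) \<le> K * r n)"
    by blast
qed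

lemma evens_ev: "(\<And>n. even n \<Longrightarrow> P n) \<Longrightarrow> eventually P evens"
  unfolding evens_def eventually_inf_principal by (intro always_eventually) auto

lemma emp_mean_diff: "emp_mean xs (\<lambda>z. a z - b z) = emp_mean xs a - emp_mean xs b"
  unfolding emp_mean_def by (simp add: sum_list_subtractf scaleR_diff_right)

lemma emp_mean_upt: "emp_mean (map (\<lambda>i. Z i \<omega>) [m..<n]) f = (1 / real (n - m)) *\<^sub>R (\<Sum>i\<in>{m..<n}. f (Z i \<omega>))"
  unfolding emp_mean_def by (simp add: interv_sum_list_conv_sum_set_nat comp_def)

lemma emp_mean_split:
  assumes "even n"
  shows "emp_mean (map (\<lambda>i. Z i \<omega>) [0..<n]) f =
     (1/2) *\<^sub>R (emp_mean (second_half Z n \<omega>) f + emp_mean (first_half Z n \<omega>) f)"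
proof -
  obtain m where n: "n = 2 * m" using assms by blast
  have s: "(\<Sum>i\<in>{0..<2*m}. f (Z i \<omega>)) = (\<Sum>i\<in>{0..<m}. f (Z i \<omega>)) + (\<Sum>i\<in>{m..<2*m}. f (Z i \<omega>))"
    by (rule sum.atLeastLessThan_concat[symmetric]) auto
  show ?thesis
    unfolding first_half_def second_half_def emp_mean_upt n s
    by (cases "m = 0") (simp_all add: scaleR_add_right algebra_simps)
qed

lemma alg_id:
  fixes n0 n1 n2 e1 e2 f1 f2 b1 b2 i j :: "'h::real_vector"
  shows "(1/2) *\<^sub>R ((n1 + e1) + (n2 + e2)) - n0 - ((1/2) *\<^sub>R (b1 + b2) + (1/2) *\<^sub>R (f1 + f2)) =
    (1/2) *\<^sub>R (((n1 - n0 + i - b1) + ((e1 - f1) - i)) + ((n2 - n0 + j - b2) + ((e2 - f2) - j)))"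
proof -
  have "n0 = (1/2) *\<^sub>R (n0 + n0)" by (simp add: scaleR_2[symmetric] del: scaleR_2)
  then show ?thesis by (simp add: algebra_simps)
qed


locale ssetup = esetup lam Pm P0 nu hb for lam :: "'z::topological_space measure" and Pm P0
    and nu :: "'z measure \<Rightarrow> 'h::{real_inner,banach,second_countable_topology}" and hb +
  fixes M :: "'a measure" and Z :: "nat \<Rightarrow> 'a \<Rightarrow> 'z"
  assumes Mprob: "prob_space M" and indep: "prob_space.indep_vars M (\<lambda>_. borel) Z UNIV"
    and distrZ: "\<forall>i. distr M borel (Z i) = P0"
begin

lemma sP0: "sets P0 = sets borel" using model P0 by auto

lemma Zm[measurable]: "Z i \<in> measurable M borel"
  using indep unfolding prob_space.indep_vars_def[OF Mprob] by auto

lemma toB: "f \<in> borel_measurable P0 \<Longrightarrow> f \<in> borel_measurable borel"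
  using measurable_cong_sets[OF sP0 refl] by blast

lemma int_Z:
  fixes f :: "'z \<Rightarrow> 'b::{banach,second_countable_topology}"
  assumes fm: "f \<in> borel_measurable P0"
  shows "integrable M (\<lambda>\<omega>. f (Z i \<omega>)) \<longleftrightarrow> integrable P0 f"
    "(\<integral>\<omega>. f (Z i \<omega>) \<partial>M) = (\<integral>z. f z \<partial>P0)"
proof -
  have fb: "f \<in> borel_measurable borel" by (rule toB[OF fm])
  show "integrable M (\<lambda>\<omega>. f (Z i \<omega>)) \<longleftrightarrow> integrable P0 f"
    using integrable_distr_eq[OF Zm fb] distrZ by simp
  show "(\<integral>\<omega>. f (Z i \<omega>) \<partial>M) = (\<integral>z. f z \<partial>P0)"
    using integral_distr[OF Zm fb] distrZ by simp
qed

lemma var_sum: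
  fixes f :: "'z \<Rightarrow> real"
  assumes fm[measurable]: "f \<in> borel_measurable P0" and fs: "integrable P0 (\<lambda>z. (f z)\<^sup>2)"
    and f0: "(\<integral>z. f z \<partial>P0) = 0"
  shows "integrable M (\<lambda>\<omega>. (\<Sum>i<n. f (Z i \<omega>))\<^sup>2) \<and>
         (\<integral>\<omega>. (\<Sum>i<n. f (Z i \<omega>))\<^sup>2 \<partial>M) = real n * (\<integral>z. (f z)\<^sup>2 \<partial>P0)"
proof -
  interpret prob_space M by (rule Mprob)
  have fb[measurable]: "f \<in> borel_measurable borel" by (rule toB[OF fm])
  have am[measurable]: "(\<lambda>\<omega>. f (Z i \<omega>)) \<in> borel_measurable M" for i by measurable
  have fsm: "(\<lambda>z. (f z)\<^sup>2) \<in> borel_measurable P0" by measurable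
  have asq: "integrable M (\<lambda>\<omega>. (f (Z i \<omega>))\<^sup>2)" for i using int_Z(1)[OF fsm, of i] fs by simp
  have ai: "integrable M (\<lambda>\<omega>. f (Z i \<omega>))" for i by (rule sq_imp_int[OF Mprob am asq])
  have a0: "(\<integral>\<omega>. f (Z i \<omega>) \<partial>M) = 0" for i using int_Z(2)[OF fm, of i] f0 by simp
  have aij: "integrable M (\<lambda>\<omega>. f (Z i \<omega>) * f (Z j \<omega>))" for i j by (rule int_prod[OF am am asq asq])
  have ind2: "indep_vars (\<lambda>_. borel) (\<lambda>i \<omega>. f (Z i \<omega>)) UNIV"
    by (rule indep_vars_compose2[OF indep]) simp
  have eij: "(\<integral>\<omega>. f (Z i \<omega>) * f (Z j \<omega>) \<partial>M) = (if i = j then (\<integral>z. (f z)\<^sup>2 \<partial>P0) else 0)" for i j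
  proof (cases "i = j")
    case True
    then show ?thesis using int_Z(2)[OF fsm, of i] by (simp add: power2_eq_square)
  next
    case False
    have ind: "indep_vars (\<lambda>_. borel) (\<lambda>i \<omega>. f (Z i \<omega>)) {i, j}"
      by (rule indep_vars_subset[OF ind2]) auto
    have "(\<integral>\<omega>. (\<Prod>l\<in>{i,j}. f (Z l \<omega>)) \<partial>M) = (\<Prod>l\<in>{i,j}. \<integral>\<omega>. f (Z l \<omega>) \<partial>M)"
      by (rule indep_vars_lebesgue_integral[OF _ ind]) (auto intro: ai)
    then show ?thesis using False a0 by simp
  qed
  have sq: "(\<Sum>i<n. f (Z i \<omega>))\<^sup>2 = (\<Sum>i<n. \<Sum>j<n. f (Z i \<omega>) * f (Z j \<omega>))" for \<omega>
    by (simp add: power2_eq_square sum_product)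
  have int: "integrable M (\<lambda>\<omega>. \<Sum>i<n. \<Sum>j<n. f (Z i \<omega>) * f (Z j \<omega>))"
    by (rule Bochner_Integration.integrable_sum, rule Bochner_Integration.integrable_sum, rule aij)
  have "(\<integral>\<omega>. (\<Sum>i<n. \<Sum>j<n. f (Z i \<omega>) * f (Z j \<omega>)) \<partial>M) = (\<Sum>i<n. \<Sum>j<n. \<integral>\<omega>. f (Z i \<omega>) * f (Z j \<omega>) \<partial>M)"
    by (simp add: Bochner_Integration.integral_sum Bochner_Integration.integrable_sum aij)
  also have "\<dots> = (\<Sum>i<n. \<Sum>j<n. (if i = j then (\<integral>z. (f z)\<^sup>2 \<partial>P0) else 0))" by (simp only: eij)
  also have "\<dots> = real n * (\<integral>z. (f z)\<^sup>2 \<partial>P0)" by simp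
  finally show ?thesis unfolding sq using int by simp
qed


lemma phi_B[measurable]: "reg_eif lam Pm nu hb P0 beta \<in> borel_measurable borel"
  by (rule toB[OF phi_meas])

lemma g_B[measurable]: "g k \<in> borel_measurable borel"
  by (rule toB[OF g_meas])

lemma Sm_AE_M:
  assumes bs: "summable (\<lambda>k. (beta k)\<^sup>2)"
  shows "AE \<omega> in M. \<forall>i\<in>{..<n}. Z i \<omega> \<in> Sm beta"
proof (rule AE_finite_allI)
  fix i
  have "AE z in distr M borel (Z i). z \<in> Sm beta" unfolding distrZ[rule_format] by (rule Sm_AE[OF bs])
  then show "AE \<omega> in M. Z i \<omega> \<in> Sm beta" by (rule AE_distrD[OF Zm])
qed simp

lemma mean_bound:
  assumes n: "n > 0" and bs: "summable (\<lambda>k. (beta k)\<^sup>2)"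
  shows "(\<integral>\<^sup>+\<omega>. ennreal ((norm ((1 / real n) *\<^sub>R (\<Sum>i<n. reg_eif lam Pm nu hb P0 beta (Z i \<omega>))))\<^sup>2) \<partial>M)
     \<le> ennreal (CC\<^sup>2 * (\<Sum>k. (beta k)\<^sup>2) / real n)"
proof -
  interpret prob_space M by (rule Mprob)
  define phi where "phi = reg_eif lam Pm nu hb P0 beta"
  define d where "d k \<omega> = beta k * ((1 / real n) * (\<Sum>i<n. g k (Z i \<omega>)))" for k \<omega>
  have dm[measurable]: "d k \<in> borel_measurable M" for k unfolding d_def by measurable
  have AEle: "AE \<omega> in M. ennreal ((norm ((1 / real n) *\<^sub>R (\<Sum>i<n. phi (Z i \<omega>))))\<^sup>2) \<le> (\<Sum>k. ennreal ((d k \<omega>)\<^sup>2))"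
    using Sm_AE_M[OF bs, of n]
  proof eventually_elim
    case (elim \<omega>)
    have "(\<lambda>k. \<Sum>i<n. (beta k * g k (Z i \<omega>)) *\<^sub>R hb k) sums (\<Sum>i<n. phi (Z i \<omega>))"
      by (rule sums_sum) (use elim phi_sums in \<open>auto simp: phi_def\<close>)
    then have "(\<lambda>k. (1 / real n) *\<^sub>R (\<Sum>i<n. (beta k * g k (Z i \<omega>)) *\<^sub>R hb k)) sums ((1 / real n) *\<^sub>R (\<Sum>i<n. phi (Z i \<omega>)))"
      by (rule bounded_linear.sums[OF bounded_linear_scaleR_right])
    moreover have "(1 / real n) *\<^sub>R (\<Sum>i<n. (beta k * g k (Z i \<omega>)) *\<^sub>R hb k) = d k \<omega> *\<^sub>R hb k" for k
    proof -
      have "(\<Sum>i<n. (beta k * g k (Z i \<omega>)) *\<^sub>R hb k) = (\<Sum>i<n. beta k * g k (Z i \<omega>)) *\<^sub>R hb k"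
        by (rule scaleR_sum_left[symmetric])
      also have "(\<Sum>i<n. beta k * g k (Z i \<omega>)) = beta k * (\<Sum>i<n. g k (Z i \<omega>))"
        by (rule sum_distrib_left[symmetric])
      finally show ?thesis unfolding d_def by (simp add: ac_simps)
    qed
    ultimately have "(\<lambda>k. d k \<omega> *\<^sub>R hb k) sums ((1 / real n) *\<^sub>R (\<Sum>i<n. phi (Z i \<omega>)))" by simp
    then show ?case by (rule norm_sq_le_sum[OF orth unit])
  qed
  have "(\<integral>\<^sup>+\<omega>. ennreal ((norm ((1 / real n) *\<^sub>R (\<Sum>i<n. phi (Z i \<omega>))))\<^sup>2) \<partial>M)
      \<le> (\<integral>\<^sup>+\<omega>. (\<Sum>k. ennreal ((d k \<omega>)\<^sup>2)) \<partial>M)"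
    by (rule nn_integral_mono_AE[OF AEle])
  also have "\<dots> = (\<Sum>k. \<integral>\<^sup>+\<omega>. ennreal ((d k \<omega>)\<^sup>2) \<partial>M)"
    by (rule nn_integral_suminf) measurable
  also have "\<dots> \<le> (\<Sum>k. ennreal (CC\<^sup>2 * (beta k)\<^sup>2 / real n))"
  proof (rule suminf_le)
    fix k
    have vs: "integrable M (\<lambda>\<omega>. (\<Sum>i<n. g k (Z i \<omega>))\<^sup>2) \<and>
         (\<integral>\<omega>. (\<Sum>i<n. g k (Z i \<omega>))\<^sup>2 \<partial>M) = real n * (\<integral>z. (g k z)\<^sup>2 \<partial>P0)"
      by (rule var_sum[OF g_meas g_sq g_mean])
    have deq: "(\<lambda>\<omega>. (d k \<omega>)\<^sup>2) = (\<lambda>\<omega>. ((beta k)\<^sup>2 / (real n)\<^sup>2) * (\<Sum>i<n. g k (Z i \<omega>))\<^sup>2)"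
      unfolding d_def by (rule ext) (simp add: power_mult_distrib power_divide)
    have di: "integrable M (\<lambda>\<omega>. (d k \<omega>)\<^sup>2)" unfolding deq using vs by simp
    have "(\<integral>\<^sup>+\<omega>. ennreal ((d k \<omega>)\<^sup>2) \<partial>M) = ennreal (\<integral>\<omega>. (d k \<omega>)\<^sup>2 \<partial>M)"
      by (rule nn_integral_eq_integral[OF di]) simp
    also have "(\<integral>\<omega>. (d k \<omega>)\<^sup>2 \<partial>M) = ((beta k)\<^sup>2 / (real n)\<^sup>2) * (real n * (\<integral>z. (g k z)\<^sup>2 \<partial>P0))"
      unfolding deq using vs by simp
    also have "\<dots> = (beta k)\<^sup>2 * (\<integral>z. (g k z)\<^sup>2 \<partial>P0) / real n"
      using n by (simp add: power2_eq_square field_simps)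
    also have "\<dots> \<le> (beta k)\<^sup>2 * CC\<^sup>2 / real n"
      by (intro divide_right_mono mult_left_mono g_bound) auto
    finally show "(\<integral>\<^sup>+\<omega>. ennreal ((d k \<omega>)\<^sup>2) \<partial>M) \<le> ennreal (CC\<^sup>2 * (beta k)\<^sup>2 / real n)"
      by (simp add: ac_simps ennreal_leI)
  next
    show "summable (\<lambda>k. ennreal (CC\<^sup>2 * (beta k)\<^sup>2 / real n))" by simp
  qed (simp)
  also have "\<dots> = ennreal (\<Sum>k. CC\<^sup>2 * (beta k)\<^sup>2 / real n)"
    by (rule suminf_ennreal2) (auto intro!: summable_divide summable_mult bs)
  also have "(\<Sum>k. CC\<^sup>2 * (beta k)\<^sup>2 / real n) = CC\<^sup>2 * (\<Sum>k. (beta k)\<^sup>2) / real n"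
    using bs by (simp add: suminf_divide suminf_mult summable_mult)
  finally show ?thesis unfolding phi_def .
qed


lemma phi_zero:
  assumes "\<And>k. beta k = 0"
  shows "reg_eif lam Pm nu hb P0 beta z = 0"
  unfolding phi_eq using assms by simp

lemma Op_mean:
  assumes beta: "\<forall>n. summable (\<lambda>k. (beta n k)\<^sup>2) \<and> (\<forall>k. 0 \<le> beta n k \<and> beta n k \<le> 1)"
  shows "Op evens M (\<lambda>n \<omega>. emp_mean (map (\<lambda>i. Z i \<omega>) [0..<n]) (reg_eif lam Pm nu hb P0 (beta n)))
           (\<lambda>n. ell2_norm (beta n) / sqrt (real n))"
  unfolding Op_def
proof (intro allI impI)
  interpret prob_space M by (rule Mprob)
  fix e :: real assume e: "e > 0"
  define K where "K = sqrt (CC\<^sup>2 / e) + 1"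
  have K0: "K > 0" unfolding K_def using e by (intro add_nonneg_pos) auto
  have CK: "CC\<^sup>2 / K\<^sup>2 < e"
  proof -
    have "sqrt (CC\<^sup>2 / e) < K" unfolding K_def by simp
    then have "(sqrt (CC\<^sup>2 / e))\<^sup>2 < K\<^sup>2" using e by (intro power_strict_mono) auto
    then have "CC\<^sup>2 / e < K\<^sup>2" using e by simp
    then show ?thesis using e K0 by (simp add: field_simps)
  qed
  have "\<exists>A\<in>sets M. measure M A \<ge> 1 - e \<and> (\<forall>\<omega>\<in>A. norm (emp_mean (map (\<lambda>i. Z i \<omega>) [0..<n]) (reg_eif lam Pm nu hb P0 (beta n)))
          \<le> K * (ell2_norm (beta n) / sqrt (real n)))" for n
  proof -
    define phi where "phi = reg_eif lam Pm nu hb P0 (beta n)"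
    define S where "S \<omega> = (1 / real n) *\<^sub>R (\<Sum>i<n. phi (Z i \<omega>))" for \<omega>
    have Seq: "emp_mean (map (\<lambda>i. Z i \<omega>) [0..<n]) phi = S \<omega>" for \<omega>
      unfolding emp_mean_upt S_def by (simp add: atLeast0LessThan)
    define rt where "rt = ell2_norm (beta n) / sqrt (real n)"
    have bs: "summable (\<lambda>k. (beta n k)\<^sup>2)" using beta by auto
    have sb0: "(\<Sum>k. (beta n k)\<^sup>2) \<ge> 0" by (intro suminf_nonneg bs) simp
    have rt0: "rt \<ge> 0" unfolding rt_def ell2_norm_def using sb0 by simp
    have space1: "measure M (space M) \<ge> 1 - e" using e by (simp add: prob_space)
    show ?thesis
    proof (cases "n = 0 \<or> rt = 0")
      case True
      have "S \<omega> = 0" for \<omega>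
      proof (cases "n = 0")
        case True then show ?thesis unfolding S_def by simp
      next
        case False
        then have "rt = 0" using \<open>n = 0 \<or> rt = 0\<close> by simp
        then have "ell2_norm (beta n) = 0" using False unfolding rt_def by simp
        then have "(\<Sum>k. (beta n k)\<^sup>2) = 0" unfolding ell2_norm_def using sb0 by simp
        then have "\<forall>k. (beta n k)\<^sup>2 = 0" using suminf_eq_zero_iff[OF bs] by simp
        then have "phi z = 0" for z unfolding phi_def by (intro phi_zero) simp
        then show ?thesis unfolding S_def by simp
      qed
      moreover have Krt: "0 \<le> K * (ell2_norm (beta n) / sqrt (real n))"
        using K0 rt0 unfolding rt_def by (intro mult_nonneg_nonneg) auto
      ultimately show ?thesis unfolding Seq[unfolded phi_def] using space1
        by (intro bexI[where x="space M"]) auto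
    next
      case False
      then have n0: "n > 0" and rtp: "rt > 0" using rt0 by auto
      have Sm[measurable]: "S \<in> borel_measurable M" unfolding S_def phi_def by measurable
      define u where "u \<omega> = (norm (S \<omega>))\<^sup>2" for \<omega>
      have um[measurable]: "u \<in> borel_measurable M" unfolding u_def by measurable
      have ub: "integrable M u \<and> (\<integral>\<omega>. u \<omega> \<partial>M) \<le> CC\<^sup>2 * (\<Sum>k. (beta n k)\<^sup>2) / real n"
        by (rule nn_le_imp_int) (use mean_bound[OF n0 bs] sb0 in \<open>auto simp: u_def S_def phi_def\<close>)
      define t where "t = (K * rt)\<^sup>2"
      have t0: "t > 0" unfolding t_def using K0 rtp by simp
      have rt2: "rt\<^sup>2 = (\<Sum>k. (beta n k)\<^sup>2) / real n"
        unfolding rt_def ell2_norm_def using sb0 n0 by (simp add: power_divide)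
      define B where "B = {\<omega> \<in> space M. t \<le> u \<omega>}"
      have Bs[measurable]: "B \<in> sets M" unfolding B_def by measurable
      have "measure M B \<le> (\<integral>\<omega>. u \<omega> \<partial>M) / t"
      proof -
        have ui: "integrable M u" using ub by simp
        have unn: "\<And>\<omega>. 0 \<le> u \<omega>" unfolding u_def by simp
        show ?thesis unfolding B_def
          by (rule integral_Markov_inequality_measure[where A="space M"]) (use ui unn t0 in auto)
      qed
      also have "\<dots> \<le> (CC\<^sup>2 * (\<Sum>k. (beta n k)\<^sup>2) / real n) / t"
        using ub t0 by (intro divide_right_mono) auto
      also have "\<dots> = CC\<^sup>2 / K\<^sup>2"
      proof -
        have tt: "t = K\<^sup>2 * ((\<Sum>k. (beta n k)\<^sup>2) / real n)" unfolding t_def using rt2 by (simp add: power_mult_distrib)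
        have "rt\<^sup>2 > 0" using rtp by simp
        then have "(\<Sum>k. (beta n k)\<^sup>2) / real n > 0" using rt2 by simp
        then have sp: "(\<Sum>k. (beta n k)\<^sup>2) > 0" using n0 by (simp add: zero_less_divide_iff)
        show ?thesis unfolding tt using sp n0 K0 by (simp add: field_simps)
      qed
      also have "\<dots> < e" by (rule CK)
      finally have mB: "measure M B < e" .
      define A where "A = space M - B"
      have As: "A \<in> sets M" unfolding A_def by measurable
      have "measure M A = 1 - measure M B" unfolding A_def by (rule prob_compl[OF Bs])
      then have mA: "measure M A \<ge> 1 - e" using mB by simp
      have "norm (S \<omega>) \<le> K * rt" if "\<omega> \<in> A" for \<omega>
      proof -
        have "(norm (S \<omega>))\<^sup>2 < (K * rt)\<^sup>2" using that unfolding A_def B_def u_def t_def by auto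
        then show ?thesis using K0 rtp by (simp add: power_less_imp_less_base less_imp_le)
      qed
      then show ?thesis using As mA unfolding Seq[unfolded phi_def] rt_def by (intro bexI[where x=A]) (auto simp: phi_def)
    qed
  qed
  then show "\<exists>K. \<forall>\<^sub>F n in evens. \<exists>A\<in>sets M. 1 - e \<le> measure M A \<and>
      (\<forall>\<omega>\<in>A. norm (emp_mean (map (\<lambda>i. Z i \<omega>) [0..<n]) (reg_eif lam Pm nu hb P0 (beta n))) \<le> K * (ell2_norm (beta n) / sqrt (real n)))"
    by (intro exI[where x=K] always_eventually allI) blast
qed

end


lemma IJ:
  fixes f phi :: "'z \<Rightarrow> 'h::{banach,second_countable_topology}"
  assumes "integrable P phi" "(\<integral>z. phi z \<partial>P) = 0"
  shows "(\<integral>z. f z - phi z \<partial>P) = (\<integral>z. f z \<partial>P)"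
proof (cases "integrable P f")
  case True
  then show ?thesis using assms by (simp add: Bochner_Integration.integral_diff)
next
  case False
  have "\<not> integrable P (\<lambda>z. f z - phi z)"
  proof
    assume "integrable P (\<lambda>z. f z - phi z)"
    then have "integrable P (\<lambda>z. (f z - phi z) + phi z)" using assms(1) by (rule Bochner_Integration.integrable_add)
    then show False using False by simp
  qed
  then show ?thesis using False by (simp add: not_integrable_integral_eq)
qed

theorem theorem5:
  fixes lam :: "'z::polish_space measure"
    and Pm :: "'z measure set"
    and nu :: "'z measure \<Rightarrow> 'h::{real_inner,banach,second_countable_topology}"
    and hb :: "nat \<Rightarrow> 'h"
    and P0 :: "'z measure"
    and M :: "'a measure"
    and Z :: "nat \<Rightarrow> 'a \<Rightarrow> 'z"
    and est1 est2 :: "nat \<Rightarrow> 'z list \<Rightarrow> 'z measure"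
    and beta :: "nat \<Rightarrow> nat \<Rightarrow> real"
  defines "Phat1 \<equiv> \<lambda>n \<omega>. est1 n (first_half Z n \<omega>)"
    and "Phat2 \<equiv> \<lambda>n \<omega>. est2 n (second_half Z n \<omega>)"
    and "rate \<equiv> \<lambda>n. ell2_norm (beta n) / sqrt (real n)"
  assumes lam: "sigma_finite_measure lam" "sets lam = sets borel"
    and model: "\<forall>P\<in>Pm. prob_space P \<and> sets P = sets borel \<and> absolutely_continuous lam P"
    and onb: "\<forall>k. hb k = 0 \<or> norm (hb k) = 1"
      "\<forall>j k. j \<noteq> k \<longrightarrow> inner (hb j) (hb k) = 0"
      "\<forall>x. (\<lambda>k. inner x (hb k) *\<^sub>R hb k) sums x"
    and P0: "P0 \<in> Pm" "pathwise_differentiable lam Pm nu P0"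
    and sample: "prob_space M" "prob_space.indep_vars M (\<lambda>_. borel) Z UNIV"
      "\<forall>i. distr M borel (Z i) = P0"
    and est: "\<forall>n. \<forall>\<omega>\<in>space M. even n \<longrightarrow>
       Phat1 n \<omega> \<in> Pm \<and> Phat2 n \<omega> \<in> Pm \<and>
       pathwise_differentiable lam Pm nu (Phat1 n \<omega>) \<and>
       pathwise_differentiable lam Pm nu (Phat2 n \<omega>)"
    and beta: "\<forall>n. summable (\<lambda>k. (beta n k)\<^sup>2) \<and> (\<forall>k. 0 \<le> beta n k \<and> beta n k \<le> 1)"
    and R: "Op evens M (\<lambda>n \<omega>. reg_rem lam Pm nu hb P0 (beta n) (Phat1 n \<omega>)) rate"
      "Op evens M (\<lambda>n \<omega>. reg_rem lam Pm nu hb P0 (beta n) (Phat2 n \<omega>)) rate"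
    and D: "Op evens M (\<lambda>n \<omega>. emp_term lam Pm nu hb P0 (beta n) (Phat1 n \<omega>) (second_half Z n \<omega>)) rate"
      "Op evens M (\<lambda>n \<omega>. emp_term lam Pm nu hb P0 (beta n) (Phat2 n \<omega>) (first_half Z n \<omega>)) rate"
  shows "Op evens M (\<lambda>n \<omega>.
            one_step lam Pm nu hb (beta n) (Phat1 n \<omega>) (second_half Z n \<omega>) (Phat2 n \<omega>) (first_half Z n \<omega>)
            - nu P0
            - ((1/2) *\<^sub>R (reg_bias nu P0 hb (beta n) (Phat1 n \<omega>)
                          + reg_bias nu P0 hb (beta n) (Phat2 n \<omega>))
               + emp_mean (map (\<lambda>i. Z i \<omega>) [0..<n]) (reg_eif lam Pm nu hb P0 (beta n)))) rate
       \<and> ((Op evens M (\<lambda>n \<omega>. reg_bias nu P0 hb (beta n) (Phat1 n \<omega>)) rate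
           \<and> Op evens M (\<lambda>n \<omega>. reg_bias nu P0 hb (beta n) (Phat2 n \<omega>)) rate)
          \<longrightarrow> Op evens M (\<lambda>n \<omega>.
                one_step lam Pm nu hb (beta n) (Phat1 n \<omega>) (second_half Z n \<omega>) (Phat2 n \<omega>) (first_half Z n \<omega>)
                - nu P0) rate)"
proof -
  have loc: "ssetup lam Pm P0 nu hb M Z"
    unfolding ssetup_def esetup_def tsetup_def ssetup_axioms_def esetup_axioms_def
    using lam model P0 onb sample by auto
  interpret S: ssetup lam Pm P0 nu hb M Z by (rule loc)
  have Mp: "prob_space M" by (rule sample(1))
  define phi0 where "phi0 n = reg_eif lam Pm nu hb P0 (beta n)" for n
  have phi0_int: "integrable P0 (phi0 n)" and phi0_mean: "(\<integral>z. phi0 n z \<partial>P0) = 0" for n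
    unfolding phi0_def using beta S.phi_integrable S.phi_mean by auto
  define X where "X n \<omega> = (1/2) *\<^sub>R
      ((reg_rem lam Pm nu hb P0 (beta n) (Phat1 n \<omega>) + emp_term lam Pm nu hb P0 (beta n) (Phat1 n \<omega>) (second_half Z n \<omega>))
     + (reg_rem lam Pm nu hb P0 (beta n) (Phat2 n \<omega>) + emp_term lam Pm nu hb P0 (beta n) (Phat2 n \<omega>) (first_half Z n \<omega>)))"
    for n \<omega>
  have OpX: "Op evens M X rate"
    unfolding X_def by (intro Op_scale Op_add[OF Mp] R D)
  define T where "T n \<omega> = one_step lam Pm nu hb (beta n) (Phat1 n \<omega>) (second_half Z n \<omega>) (Phat2 n \<omega>) (first_half Z n \<omega>)
            - nu P0
            - ((1/2) *\<^sub>R (reg_bias nu P0 hb (beta n) (Phat1 n \<omega>)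
                          + reg_bias nu P0 hb (beta n) (Phat2 n \<omega>))
               + emp_mean (map (\<lambda>i. Z i \<omega>) [0..<n]) (reg_eif lam Pm nu hb P0 (beta n)))" for n \<omega>
  have XT: "X n \<omega> = T n \<omega>" if "even n" for n \<omega>
  proof -
    have e1: "emp_term lam Pm nu hb P0 (beta n) P xs =
        (emp_mean xs (reg_eif lam Pm nu hb P (beta n)) - emp_mean xs (phi0 n)) - (\<integral>z. reg_eif lam Pm nu hb P (beta n) z \<partial>P0)"
      for P xs
      unfolding emp_term_def emp_mean_diff phi0_def[symmetric] IJ[OF phi0_int phi0_mean] ..
    have r1: "reg_rem lam Pm nu hb P0 (beta n) P = nu P - nu P0 + (\<integral>z. reg_eif lam Pm nu hb P (beta n) z \<partial>P0)
        - reg_bias nu P0 hb (beta n) P" for P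
      unfolding reg_rem_def ..
    show ?thesis
      unfolding X_def T_def e1 r1 one_step_def emp_mean_split[OF that] phi0_def
      by (rule alg_id[symmetric])
  qed
  have OpT: "Op evens M T rate"
    by (rule Op_cong[OF OpX]) (rule evens_ev, use XT in simp)
  have OpE: "Op evens M (\<lambda>n \<omega>. emp_mean (map (\<lambda>i. Z i \<omega>) [0..<n]) (reg_eif lam Pm nu hb P0 (beta n))) rate"
    unfolding rate_def by (rule S.Op_mean[OF beta])
  have OpT': "Op evens M (\<lambda>n \<omega>. T n \<omega>) rate" using OpT by simp
  show ?thesis unfolding T_def[symmetric]
  proof (intro conjI impI)
    show "Op evens M (\<lambda>n \<omega>. T n \<omega>) rate" by (rule OpT')
  next
    assume B: "Op evens M (\<lambda>n \<omega>. reg_bias nu P0 hb (beta n) (Phat1 n \<omega>)) rate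
           \<and> Op evens M (\<lambda>n \<omega>. reg_bias nu P0 hb (beta n) (Phat2 n \<omega>)) rate"
    have "Op evens M (\<lambda>n \<omega>. T n \<omega> + ((1/2) *\<^sub>R (reg_bias nu P0 hb (beta n) (Phat1 n \<omega>)
                          + reg_bias nu P0 hb (beta n) (Phat2 n \<omega>))
               + emp_mean (map (\<lambda>i. Z i \<omega>) [0..<n]) (reg_eif lam Pm nu hb P0 (beta n)))) rate"
      using B by (intro Op_add[OF Mp] OpT Op_scale OpE) auto
    then show "Op evens M (\<lambda>n \<omega>.
                one_step lam Pm nu hb (beta n) (Phat1 n \<omega>) (second_half Z n \<omega>) (Phat2 n \<omega>) (first_half Z n \<omega>)
                - nu P0) rate"
      by (rule Op_cong) (intro always_eventually allI ballI, simp add: T_def)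
  qed
qed


end
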